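(* Let $X_1,\dots,X_n$, $\varepsilon$, $\gamma$ be as in the context, and let $L>0$ satisfy $L^3=L_{E,n}^3(\varepsilon,\gamma)$ or $L^3=L_{R,n}^3(\varepsilon,\gamma)$. Then: (i) for every $t\in\mathbb R$, $|\overline f_n(t)|\le\exp\{-k(L^3|t|,2\varepsilon|t|)\,t^2\}$; (ii) for every $L_0\ge L$, every $\tau\ge\underline\tau_1(L_0,\varepsilon):=\pi L_0^3/\varepsilon$ and every $|t|\le\tau/L^3$, $|\overline f_n(t)|\le\exp\{-k(\tau)t^2\}$; moreover $k(\tau)>0$ if and only if $\tau<\pi/4$, and the interval $[\underline\tau_1(L_0,\varepsilon),\pi/4)$ is nonempty if and only if $L_0<(\varepsilon/4)^{1/3}$; (iii) statements (i) and (ii) remain true when $L>0$ is defined instead by $L^3=\sup_{0<z\le\varepsilon}zL_n(z)$.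
   Context: Let $X_1,\dots,X_n$ be independent real random variables with $\mathbb E X_k=0$, $\sigma_k^2=\mathbb E X_k^2<\infty$, normalized so that $B_n^2=\sum_k\sigma_k^2=1$. Let $f_k(t)=\mathbb E e^{itX_k}$ and $\overline f_n(t)=\prod_{k=1}^nf_k(t)$. For $z\ge0$, $\sigma_k^2(z)=\mathbb E X_k^2\mathbf 1(|X_k|\ge z)$, $L_n(z)=\sum_k\sigma_k^2(z)$; for $z>0$, $M_n(z)=\sum_k\mathbb E X_k^3\mathbf 1(|X_k|<z)$. Fix $\gamma>0$. For $\varepsilon\in(0,\infty]$, $L_{E,n}^3(\varepsilon,\gamma)=\sup_{0<z\le\varepsilon}\{\gamma|M_n(z)|+zL_n(z)\}$; for $\varepsilon\in(0,\infty)$, $L_{R,n}^3(\varepsilon,\gamma)=\gamma|M_n(\varepsilon)|+\sup_{0<z\le\varepsilon}zL_n(z)$ ($\varepsilon$ ranges accordingly). Let $a(\theta)=2\frac{1-\cos\theta}{\theta^2}-\frac{\sin\theta}{2\theta}$, $b(\theta)=\frac{1-\cos\theta}{\theta^4}-\frac{\sin\theta}{2\theta^3}$ for $\theta\in(0,2\pi]$. For $\tau\ge0$, $u\ge0$, $\theta\in(0,2\pi]$ let $k(\tau,u,\theta)=a(\theta)-4\tau u^{-1}(a(\theta)+b(\theta)u^2)$ for $u>0$, $k(0,0,\theta)=a(\theta)$, $k(\tau,0,\theta)=-\infty$ for $\tau>0$; $k(\tau,u)=\sup_{0<\theta<2\pi}k\big(\tau,\min\{u,\sqrt{a(\theta)/b(\theta)}\},\theta\big)$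 (with $\min\{\infty,x\}=x$); and $k(\tau)=\sup_{0<\theta\le2\pi}\{a(\theta)-8\tau\sqrt{a(\theta)b(\theta)}\}$. *)

theory Defs
  imports "HOL-Probability.Probability"
begin

definition fchar :: "'a measure \<Rightarrow> (nat \<Rightarrow> 'a \<Rightarrow> real) \<Rightarrow> nat \<Rightarrow> real \<Rightarrow> complex" where
  "fchar M X k t = char (distr M borel (X k)) t"

definition fbar :: "'a measure \<Rightarrow> (nat \<Rightarrow> 'a \<Rightarrow> real) \<Rightarrow> nat \<Rightarrow> real \<Rightarrow> complex" where
  "fbar M X n t = (\<Prod>k\<in>{1..n}. fchar M X k t)"

definition sigma2z :: "'a measure \<Rightarrow> (nat \<Rightarrow> 'a \<Rightarrow> real) \<Rightarrow> nat \<Rightarrow> real \<Rightarrow> real" where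
  "sigma2z M X k z = (LINT \<omega>|M. (X k \<omega>)^2 * indicator {x. z \<le> \<bar>x\<bar>} (X k \<omega>))"

definition Ln :: "'a measure \<Rightarrow> (nat \<Rightarrow> 'a \<Rightarrow> real) \<Rightarrow> nat \<Rightarrow> real \<Rightarrow> real" where
  "Ln M X n z = (\<Sum>k\<in>{1..n}. sigma2z M X k z)"

definition Mn :: "'a measure \<Rightarrow> (nat \<Rightarrow> 'a \<Rightarrow> real) \<Rightarrow> nat \<Rightarrow> real \<Rightarrow> real" where
  "Mn M X n z = (\<Sum>k\<in>{1..n}. LINT \<omega>|M. (X k \<omega>)^3 * indicator {x. \<bar>x\<bar> < z} (X k \<omega>))"

(* L_{E,n}^3(eps,gamma), eps \<in> (0,\<infinity>], value in ereal (sup may be infinite a priori) *)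
definition LE3 :: "'a measure \<Rightarrow> (nat \<Rightarrow> 'a \<Rightarrow> real) \<Rightarrow> nat \<Rightarrow> ereal \<Rightarrow> real \<Rightarrow> ereal" where
  "LE3 M X n eps \<gamma> = (SUP z\<in>{z. 0 < z \<and> ereal z \<le> eps}.
      ereal (\<gamma> * \<bar>Mn M X n z\<bar> + z * Ln M X n z))"

definition LR3 :: "'a measure \<Rightarrow> (nat \<Rightarrow> 'a \<Rightarrow> real) \<Rightarrow> nat \<Rightarrow> real \<Rightarrow> real \<Rightarrow> ereal" where
  "LR3 M X n eps \<gamma> = ereal (\<gamma> * \<bar>Mn M X n eps\<bar>) +
      (SUP z\<in>{0<..eps}. ereal (z * Ln M X n z))"

definition LS3 :: "'a measure \<Rightarrow> (nat \<Rightarrow> 'a \<Rightarrow> real) \<Rightarrow> nat \<Rightarrow> ereal \<Rightarrow> ereal" where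
  "LS3 M X n eps = (SUP z\<in>{z. 0 < z \<and> ereal z \<le> eps}. ereal (z * Ln M X n z))"

definition afun :: "real \<Rightarrow> real" where
  "afun \<theta> = 2 * (1 - cos \<theta>) / \<theta>^2 - sin \<theta> / (2 * \<theta>)"

definition bfun :: "real \<Rightarrow> real" where
  "bfun \<theta> = (1 - cos \<theta>) / \<theta>^4 - sin \<theta> / (2 * \<theta>^3)"

definition k3 :: "real \<Rightarrow> real \<Rightarrow> real \<Rightarrow> ereal" where
  "k3 \<tau> u \<theta> =
     (if u > 0 then ereal (afun \<theta> - 4 * \<tau> / u * (afun \<theta> + bfun \<theta> * u^2))
      else if \<tau> = 0 then ereal (afun \<theta>) else -\<infinity>)"

definition k2 :: "real \<Rightarrow> ereal \<Rightarrow> ereal" where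
  "k2 \<tau> u = (SUP \<theta>\<in>{0<..<2*pi}.
      k3 \<tau> (real_of_ereal (min u (ereal (sqrt (afun \<theta> / bfun \<theta>))))) \<theta>)"

definition k1 :: "real \<Rightarrow> ereal" where
  "k1 \<tau> = (SUP \<theta>\<in>{0<..2*pi}. ereal (afun \<theta> - 8 * \<tau> * sqrt (afun \<theta> * bfun \<theta>)))"

(* underline tau_1(L0,eps) = pi L0^3 / eps  (= 0 if eps = \<infinity>) *)
definition tau1 :: "real \<Rightarrow> ereal \<Rightarrow> ereal" where
  "tau1 L0 eps = ereal (pi * L0^3) / eps"

definition cbrt_quarter :: "ereal \<Rightarrow> ereal" where
  "cbrt_quarter eps = (case eps of ereal e \<Rightarrow> ereal (root 3 (e / 4)) | _ \<Rightarrow> \<infinity>)"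

end

theory Submission
  imports Defs
begin

definition Kf :: "real \<Rightarrow> real" where
  "Kf y = 8 * (1 - cos y) - 5 * y * sin y + y^2 * cos y"

lemma afun_deriv:
  assumes "x > 0"
  shows "(afun has_real_derivative (- Kf x / (2 * x^3))) (at x)"
  unfolding afun_def[abs_def]
  apply (rule DERIV_cong)
   apply (rule derivative_eq_intros refl | use assms in \<open>simp; fail\<close>)+
  using assms apply (simp add: Kf_def field_simps)
  apply (simp add: eval_nat_numeral algebra_simps)
  done

lemma bfun_deriv:
  assumes "x > 0"
  shows "(bfun has_real_derivative (- Kf x / (2 * x^5))) (at x)"
  unfolding bfun_def[abs_def]
  apply (rule DERIV_cong)
   apply (rule derivative_eq_intros refl | use assms in \<open>simp; fail\<close>)+
  using assms apply (simp add: Kf_def field_simps)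
  apply (simp add: eval_nat_numeral algebra_simps)
  done

lemma cos_ge_quad: "cos (x::real) \<ge> 1 - x^2/2"
proof -
  have *: "cos x \<ge> 1 - x^2/2" if "x \<ge> 0" for x :: real
  proof -
    have "(\<lambda>x. cos x - 1 + x^2/2) 0 \<le> (\<lambda>x. cos x - 1 + x^2/2) x"
      apply (rule DERIV_nonneg_imp_nondecreasing[OF that])
      apply (rule exI[of _ "x - sin x" for x])
      apply (intro conjI)
       apply (rule DERIV_cong, (rule derivative_eq_intros refl | simp; fail | simp add: algebra_simps eval_nat_numeral; fail | simp add: field_simps eval_nat_numeral; fail)+)
      using sin_x_le_x by auto
    then show ?thesis by simp
  qed
  show ?thesis
  proof (cases "x \<ge> 0")
    case True then show ?thesis using * by blast
  next
    case False then show ?thesis using *[of "-x"] by simp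
  qed
qed

lemma sin_ge_cubic:
  fixes x :: real
  assumes "x \<ge> 0" shows "sin x \<ge> x - x^3/6"
proof -
  have "(\<lambda>x. sin x - x + x^3/6) 0 \<le> (\<lambda>x. sin x - x + x^3/6) x"
  proof (rule DERIV_nonneg_imp_nondecreasing[OF assms])
    fix z :: real
    have "((\<lambda>x. sin x - x + x^3/6) has_real_derivative (cos z - 1 + z^2/2)) (at z)"
      by (rule DERIV_cong, (rule derivative_eq_intros refl | simp; fail | simp add: algebra_simps eval_nat_numeral; fail | simp add: field_simps eval_nat_numeral; fail)+)
    moreover have "cos z - 1 + z^2/2 \<ge> 0" using cos_ge_quad[of z] by linarith
    ultimately show "\<exists>d. ((\<lambda>x. sin x - x + x^3/6) has_real_derivative d) (at z) \<and> 0 \<le> d" by blast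
  qed
  then show ?thesis by simp
qed

lemma m_pos:
  assumes "0 < y" "y \<le> pi" shows "sin y - y * cos y > 0"
proof -
  have "(\<lambda>x. sin x - x * cos x) 0 < (\<lambda>x. sin x - x * cos x) y"
  proof (rule DERIV_pos_imp_increasing_open[OF assms(1)])
    fix x assume x: "0 < x" "x < y"
    have "((\<lambda>x. sin x - x * cos x) has_real_derivative x * sin x) (at x)"
      by (rule DERIV_cong, (rule derivative_eq_intros refl | simp; fail | simp add: algebra_simps eval_nat_numeral; fail | simp add: field_simps eval_nat_numeral; fail)+)
    moreover have "x * sin x > 0" using x assms by (intro mult_pos_pos sin_gt_zero) auto
    ultimately show "\<exists>d. ((\<lambda>x. sin x - x * cos x) has_real_derivative d) (at x) \<and> 0 < d" by blast
  next
    show "continuous_on {0..y} (\<lambda>x. sin x - x * cos x)" by (intro continuous_intros)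
  qed
  then show ?thesis by simp
qed

lemma m_nonneg:
  assumes "0 \<le> y" "y \<le> pi" shows "sin y - y * cos y \<ge> 0"
  using m_pos[of y] assms by (cases "y = 0") auto

lemma n_pos:
  assumes "0 < y" "y < 2*pi" shows "2 * (1 - cos y) - y * sin y > 0"
proof (cases "y \<le> pi")
  case True
  have "(\<lambda>x. 2 * (1 - cos x) - x * sin x) 0 < (\<lambda>x. 2 * (1 - cos x) - x * sin x) y"
  proof (rule DERIV_pos_imp_increasing_open[OF assms(1)])
    fix x assume x: "0 < x" "x < y"
    have "((\<lambda>x. 2 * (1 - cos x) - x * sin x) has_real_derivative sin x - x * cos x) (at x)"
      by (rule DERIV_cong, (rule derivative_eq_intros refl | simp; fail | simp add: algebra_simps eval_nat_numeral; fail | simp add: field_simps eval_nat_numeral; fail)+)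
    moreover have "sin x - x * cos x > 0" using x True by (intro m_pos) auto
    ultimately show "\<exists>d. ((\<lambda>x. 2 * (1 - cos x) - x * sin x) has_real_derivative d) (at x) \<and> 0 < d" by blast
  next
    show "continuous_on {0..y} (\<lambda>x. 2 * (1 - cos x) - x * sin x)" by (intro continuous_intros)
  qed
  then show ?thesis by simp
next
  case False
  then have "sin y < 0" using assms sin_lt_zero by auto
  moreover have "cos y \<le> 1" by simp
  ultimately show ?thesis using mult_pos_neg[OF assms(1) \<open>sin y < 0\<close>] by (smt (verit))
qed

lemma one_minus_cos_pos:
  assumes "0 < y" "y < 2*pi" shows "1 - cos y > 0"
proof -
  have "cos y = 1 - 2 * (sin (y/2))^2" using cos_double_sin[of "y/2"] by simp
  moreover have "sin (y/2) > 0" using assms by (intro sin_gt_zero) auto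
  ultimately show ?thesis by simp
qed

lemma bfun_pos:
  assumes "0 < y" "y < 2*pi" shows "bfun y > 0"
proof -
  have "bfun y = (2 * (1 - cos y) - y * sin y) / (2 * y^4)"
    using assms unfolding bfun_def by (simp add: field_simps eval_nat_numeral)
  then show ?thesis using n_pos[OF assms] assms by simp
qed

lemma afun_minus_bfun:
  assumes "0 < y" shows "afun y - y^2 * bfun y = (1 - cos y) / y^2"
  using assms unfolding afun_def bfun_def by (simp add: field_simps eval_nat_numeral)

lemma afun_pos:
  assumes "0 < y" "y < 2*pi" shows "afun y > 0"
proof -
  have "y^2 * bfun y > 0" using bfun_pos[OF assms] assms by simp
  moreover have "(1 - cos y) / y^2 > 0" using one_minus_cos_pos[OF assms] assms by simp
  ultimately show ?thesis using afun_minus_bfun[of y] assms by linarith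
qed

lemma Kf_deriv: "(Kf has_real_derivative (3 * (sin x - x * cos x) - x^2 * sin x)) (at x)"
  unfolding Kf_def[abs_def]
  by (rule DERIV_cong, (rule derivative_eq_intros refl | simp; fail | simp add: algebra_simps eval_nat_numeral; fail | simp add: field_simps eval_nat_numeral; fail)+)

lemma Kf_nonneg:
  assumes "0 \<le> y" "y \<le> 2*pi" shows "Kf y \<ge> 0"
proof -
  have K1: "3 * (sin x - x * cos x) - x^2 * sin x \<ge> 0" if "0 \<le> x" "x \<le> pi" for x
  proof -
    have "(\<lambda>x. 3 * (sin x - x * cos x) - x^2 * sin x) 0 \<le> (\<lambda>x. 3 * (sin x - x * cos x) - x^2 * sin x) x"
    proof (rule DERIV_nonneg_imp_nondecreasing[OF that(1)])
      fix z :: real assume z: "0 \<le> z" "z \<le> x"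
      have "((\<lambda>x. 3 * (sin x - x * cos x) - x^2 * sin x) has_real_derivative (z * (sin z - z * cos z))) (at z)"
        by (rule DERIV_cong, (rule derivative_eq_intros refl | simp; fail | simp add: algebra_simps eval_nat_numeral; fail | simp add: field_simps eval_nat_numeral; fail)+)
      moreover have "z * (sin z - z * cos z) \<ge> 0" using m_nonneg[of z] z that by simp
      ultimately show "\<exists>d. ((\<lambda>x. 3 * (sin x - x * cos x) - x^2 * sin x) has_real_derivative d) (at z) \<and> 0 \<le> d" by blast
    qed
    then show ?thesis by simp
  qed
  show ?thesis
  proof (cases "y \<le> pi")
    case True
    have "Kf 0 \<le> Kf y"
    proof (rule DERIV_nonneg_imp_nondecreasing[OF assms(1)])
      fix x assume x: "0 \<le> x" "x \<le> y"
      then have "x \<le> pi" using True by linarith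
      then show "\<exists>d. (Kf has_real_derivative d) (at x) \<and> 0 \<le> d"
        using Kf_deriv[of x] K1[OF x(1)] by blast
    qed
    then show ?thesis by (simp add: Kf_def)
  next
    case False
    have sy: "sin y \<le> 0"
    proof (cases "y = 2*pi")
      case True then show ?thesis by simp
    next
      case f: False then show ?thesis using assms False sin_le_zero by auto
    qed
    show ?thesis
    proof (cases "cos y \<ge> 0")
      case True
      have "0 \<le> 8 * (1 - cos y)" by simp
      moreover have "0 \<le> - 5 * y * sin y" using sy assms by (simp add: mult_nonneg_nonpos)
      moreover have "0 \<le> y^2 * cos y" using True by simp
      ultimately show ?thesis unfolding Kf_def by linarith
    next
      case c: False
      define p where "p = y - pi"
      have p0: "0 \<le> p" using False p_def by simp
      have yp: "y = pi + p" using p_def by simp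
      have cy: "cos y = - cos p" using yp by (simp add: cos_add)
      have sy2: "sin y = - sin p" using yp by (simp add: sin_add)
      have pi4: "pi < 4" using pi_less_4 .
      have pi3: "3 < pi" using pi_gt3 .
      have p1: "p < pi/2"
      proof (rule ccontr)
        assume "\<not> p < pi/2"
        then have "pi/2 \<le> p" by simp
        moreover have "p \<le> pi" using assms p_def by simp
        ultimately have "cos (pi - p) \<ge> 0" by (intro cos_ge_zero) auto
        then have "cos p \<le> 0" by (simp add: cos_diff)
        then show False using c cy by simp
      qed
      have sc: "sin p \<ge> p - p^3/6" using sin_ge_cubic[OF p0] .
      have "p^2 \<le> (pi/2)^2" using p0 p1 by (intro power_mono) auto
      also have "\<dots> \<le> 3"
      proof -
        have "pi * pi \<le> 3.2 * 3.2" using pi_approx(2) by (intro mult_mono) auto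
        then show ?thesis by (simp add: power2_eq_square)
      qed
      finally have p2: "p^2 \<le> 3" .
      have "p * p^2 \<le> p * 3" using p2 p0 by (intro mult_left_mono) auto
      then have "p^3/6 \<le> p/2" by (simp add: power3_eq_cube power2_eq_square)
      then have sp: "sin p \<ge> p/2" using sc by linarith
      have cp: "cos p \<le> 1" by simp
      have cp0: "cos p \<ge> 0" using c cy by simp
      have "y^2 \<ge> 3^2" using yp p0 pi3 by (intro power_mono) auto
      then have ysq: "y^2 \<ge> 8" by simp
      have e1: "Kf y = 8 + (8 - y^2) * cos p + 5 * y * sin p"
        unfolding Kf_def cy sy2 by (simp add: algebra_simps)
      have "(8 - y^2) * (cos p - 1) \<ge> 0"
        using ysq cp by (intro mult_nonpos_nonpos) auto
      then have e2: "(8 - y^2) * cos p \<ge> 8 - y^2" by (simp add: algebra_simps)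
      have e3: "5 * y * sin p \<ge> 5 * y * (p/2)"
        using sp yp p0 pi3 by (intro mult_left_mono) auto
      have e4: "16 - y^2 + 5 * y * (p/2) = (16 - pi^2) + pi * p / 2 + 3 * p^2 / 2"
        unfolding yp by (simp add: algebra_simps power2_eq_square)
      have e5: "pi^2 < 16"
      proof -
        have "pi*pi < 4*4" using pi4 by (intro mult_strict_mono) auto
        then show ?thesis by (simp add: power2_eq_square)
      qed
      have e6: "pi * p \<ge> 0" "p^2 \<ge> 0" using p0 pi3 by auto
      have "Kf y \<ge> 16 - y^2 + 5 * y * (p/2)" using e1 e2 e3 by linarith
      moreover have "16 - y^2 + 5 * y * (p/2) > 0" unfolding e4 using e5 e6 by linarith
      ultimately show ?thesis by linarith
    qed
  qed
qed


lemma quartic_tangent: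
  assumes "0 < \<theta>" "\<theta> \<le> 2*pi" "0 < y" "y \<le> 2*pi"
  shows "afun \<theta> * y^2 - bfun \<theta> * y^4 \<le> 1 - cos y"
proof -
  define \<Phi> where "\<Phi> x = afun x * y^2 - bfun x * y^4" for x
  have D: "(\<Phi> has_real_derivative Kf x * y^2 * (y^2 - x^2) / (2 * x^5)) (at x)" if "x > 0" for x
  proof -
    have "(\<Phi> has_real_derivative (- Kf x / (2 * x^3)) * y^2 - (- Kf x / (2 * x^5)) * y^4) (at x)"
      unfolding \<Phi>_def[abs_def]
      by (intro DERIV_diff DERIV_cmult_right afun_deriv bfun_deriv that)
    moreover have "(- Kf x / (2 * x^3)) * y^2 - (- Kf x / (2 * x^5)) * y^4 = Kf x * y^2 * (y^2 - x^2) / (2 * x^5)"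
      using that by (simp add: field_simps eval_nat_numeral)
    ultimately show ?thesis by simp
  qed
  have \<Phi>y: "\<Phi> y = 1 - cos y"
    using assms unfolding \<Phi>_def afun_def bfun_def by (simp add: field_simps eval_nat_numeral)
  show ?thesis
  proof (cases "\<theta> \<le> y")
    case True
    have "\<Phi> \<theta> \<le> \<Phi> y"
    proof (rule DERIV_nonneg_imp_nondecreasing[OF True])
      fix x assume x: "\<theta> \<le> x" "x \<le> y"
      have "Kf x \<ge> 0" using x assms by (intro Kf_nonneg) auto
      moreover have "y^2 - x^2 \<ge> 0" using x assms by (simp add: power_mono)
      ultimately have "Kf x * y^2 * (y^2 - x^2) / (2 * x^5) \<ge> 0" using x assms by simp
      then show "\<exists>d. (\<Phi> has_real_derivative d) (at x) \<and> 0 \<le> d" using D[of x] x assms by auto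
    qed
    then show ?thesis using \<Phi>y unfolding \<Phi>_def by simp
  next
    case False
    have "\<Phi> y \<ge> \<Phi> \<theta>"
    proof (rule DERIV_nonpos_imp_nonincreasing[of y \<theta> \<Phi>])
      show "y \<le> \<theta>" using False by simp
      fix x assume x: "y \<le> x" "x \<le> \<theta>"
      have "Kf x \<ge> 0" using x assms by (intro Kf_nonneg) auto
      moreover have "y^2 - x^2 \<le> 0" using x assms by (simp add: power_mono)
      ultimately have "Kf x * y^2 * (y^2 - x^2) / (2 * x^5) \<le> 0" using x assms
        by (intro divide_nonpos_pos mult_nonneg_nonpos) auto
      then show "\<exists>d. (\<Phi> has_real_derivative d) (at x) \<and> d \<le> 0" using D[of x] x assms by auto
    qed
    then show ?thesis using \<Phi>y unfolding \<Phi>_def by simp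
  qed
qed

lemma afun_le_bfun:
  assumes "0 < \<theta>" "\<theta> < 2*pi"
  shows "afun \<theta> \<le> 4 * pi^2 * bfun \<theta>"
proof -
  have "afun \<theta> * (2*pi)^2 - bfun \<theta> * (2*pi)^4 \<le> 1 - cos (2*pi)"
    using assms by (intro quartic_tangent) auto
  then have "(2*pi)^2 * (afun \<theta> - 4 * pi^2 * bfun \<theta>) \<le> 0"
    by (simp add: algebra_simps eval_nat_numeral)
  moreover have "(2*pi)^2 > 0" by simp
  ultimately show ?thesis by (simp add: mult_le_0_iff)
qed

lemma sqrt_ab_le:
  assumes "0 < \<theta>" "\<theta> < 2*pi"
  shows "sqrt (afun \<theta> / bfun \<theta>) \<le> 2*pi"
proof -
  have "afun \<theta> / bfun \<theta> \<le> (2*pi)^2"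
    using afun_le_bfun[OF assms] bfun_pos[OF assms] by (simp add: divide_le_eq power_mult_distrib)
  then show ?thesis by (metis real_sqrt_le_mono real_sqrt_abs abs_of_nonneg pi_ge_zero mult_nonneg_nonneg zero_le_numeral)
qed

lemma sqrt_ab_gt:
  assumes "0 < \<theta>" "\<theta> < 2*pi"
  shows "\<theta> < sqrt (afun \<theta> / bfun \<theta>)"
proof -
  have "afun \<theta> - \<theta>^2 * bfun \<theta> > 0"
    using afun_minus_bfun[of \<theta>] one_minus_cos_pos[OF assms] assms by simp
  then have "\<theta>^2 < afun \<theta> / bfun \<theta>"
    using bfun_pos[OF assms] by (simp add: less_divide_eq algebra_simps)
  then show ?thesis using assms real_less_rsqrt by blast
qed

lemma quartic_bound:
  assumes "0 < \<theta>" "\<theta> < 2*pi" "\<bar>y\<bar> \<le> sqrt (afun \<theta> / bfun \<theta>)"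
  shows "afun \<theta> * y^2 - bfun \<theta> * y^4 \<le> 1 - cos y"
proof (cases "y = 0")
  case True then show ?thesis by simp
next
  case False
  have "afun \<theta> * \<bar>y\<bar>^2 - bfun \<theta> * \<bar>y\<bar>^4 \<le> 1 - cos \<bar>y\<bar>"
    using assms False sqrt_ab_le[OF assms(1,2)] by (intro quartic_tangent) auto
  then show ?thesis by (simp add: power2_abs)
qed

lemma sep_alg:
  fixes x y p q s :: real
  assumes "0 \<le> q" "q \<le> p" "y^2 \<le> x^2" "s \<le> p"
  shows "(x-y)^2 * s \<le> 2 * x^2 * p + 2 * y^2 * q - 2 * x * y * (p + q)"
proof -
  have "(x-y)^2 * s \<le> (x-y)^2 * p" using assms by (intro mult_left_mono) auto
  moreover have "(p - q) * (x^2 - y^2) \<ge> 0" using assms by auto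
  moreover have "q * (x-y)^2 \<ge> 0" using assms by auto
  moreover have "2 * x^2 * p + 2 * y^2 * q - 2 * x * y * (p + q) - (x-y)^2 * p
      = (p - q) * (x^2 - y^2) + q * (x-y)^2"
    by (simp add: algebra_simps power2_eq_square)
  ultimately show ?thesis by linarith
qed

definition Pfun :: "real \<Rightarrow> real \<Rightarrow> real \<Rightarrow> real \<Rightarrow> real \<Rightarrow> real" where
  "Pfun A B t e x = (if \<bar>x\<bar> < e then 4 * B * t^2 * x^2 else A)"

lemma pw_bound:
  fixes A B t e :: real
  assumes A: "A > 0" and B: "B > 0" and e: "e > 0" and et: "2 * e * \<bar>t\<bar> \<le> sqrt (A / B)"
    and QH: "\<And>y. \<bar>y\<bar> \<le> sqrt (A / B) \<Longrightarrow> A * y^2 - B * y^4 \<le> 1 - cos y"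
  shows "A * t^2 * (x-y)^2 - t^2 * (2 * x^2 * Pfun A B t e x + 2 * y^2 * Pfun A B t e y
           - 2 * x * y * (Pfun A B t e x + Pfun A B t e y)) \<le> 1 - cos (t * (x-y))"
proof -
  have et2: "4 * B * t^2 * e^2 \<le> A"
  proof -
    have "(2 * e * \<bar>t\<bar>)^2 \<le> (sqrt (A/B))^2" using et e by (intro power_mono) auto
    then have "4 * e^2 * t^2 \<le> A / B" using A B by (simp add: power_mult_distrib power2_abs)
    then show ?thesis using B by (simp add: le_divide_eq algebra_simps)
  qed
  define P where "P = Pfun A B t e"
  define w where "w = x - y"
  define \<psi> where "\<psi> = (if \<bar>w\<bar> < 2*e then B * t^2 * w^2 else A)"
  have Pmono: "P v \<le> P u" if "\<bar>v\<bar> \<le> \<bar>u\<bar>" for u v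
  proof -
    have "4 * B * t^2 * v^2 \<le> 4 * B * t^2 * u^2"
      using that B by (intro mult_left_mono) (auto simp: abs_le_square_iff)
    moreover have "4 * B * t^2 * v^2 \<le> A" if "\<bar>v\<bar> < e"
    proof -
      have "v^2 \<le> e^2" using that e abs_le_square_iff[of v e] by simp
      then have "4 * B * t^2 * v^2 \<le> 4 * B * t^2 * e^2" using B by (intro mult_left_mono) auto
      then show ?thesis using et2 by linarith
    qed
    ultimately show ?thesis unfolding P_def Pfun_def using that by auto
  qed
  have P0: "P v \<ge> 0" for v unfolding P_def Pfun_def using A B by auto
  have \<psi>le: "\<psi> \<le> P u" if "\<bar>w\<bar> \<le> 2 * \<bar>u\<bar>" for u
  proof (cases "\<bar>w\<bar> < 2*e")
    case True
    have "w^2 \<le> (2*u)^2" using that abs_le_square_iff[of w "2*u"] by (simp add: abs_mult)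
    then have "B * t^2 * w^2 \<le> B * t^2 * (2*u)^2" using B by (intro mult_left_mono) auto
    moreover have "w^2 \<le> (2*e)^2" using True e abs_le_square_iff[of w "2*e"] by simp
    then have "B * t^2 * w^2 \<le> B * t^2 * (2*e)^2" using B by (intro mult_left_mono) auto
    ultimately show ?thesis unfolding \<psi>_def P_def Pfun_def using True et2
      by (auto simp: power_mult_distrib)
  next
    case False
    then have "\<not> \<bar>u\<bar> < e" using that by linarith
    then show ?thesis unfolding \<psi>_def P_def Pfun_def using False by auto
  qed
  have partb: "w^2 * \<psi> \<le> 2 * x^2 * P x + 2 * y^2 * P y - 2 * x * y * (P x + P y)"
  proof (cases "\<bar>y\<bar> \<le> \<bar>x\<bar>")
    case True
    have "\<bar>w\<bar> \<le> 2 * \<bar>x\<bar>" unfolding w_def using True by linarith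
    then have s1: "\<psi> \<le> P x" by (rule \<psi>le)
    have s2: "y^2 \<le> x^2" using True abs_le_square_iff by blast
    show ?thesis unfolding w_def
      using sep_alg[OF P0 Pmono[OF True] s2 s1] .
  next
    case False
    then have F: "\<bar>x\<bar> \<le> \<bar>y\<bar>" by simp
    have "\<bar>w\<bar> \<le> 2 * \<bar>y\<bar>" unfolding w_def using F by linarith
    then have s1: "\<psi> \<le> P y" by (rule \<psi>le)
    have s2: "x^2 \<le> y^2" using F abs_le_square_iff by blast
    have "(y-x)^2 * \<psi> \<le> 2 * y^2 * P y + 2 * x^2 * P x - 2 * y * x * (P y + P x)"
      using sep_alg[OF P0 Pmono[OF F] s2 s1] .
    then show ?thesis unfolding w_def by (simp add: power2_commute algebra_simps)
  qed
  have parta: "A * t^2 * w^2 - t^2 * (w^2 * \<psi>) \<le> 1 - cos (t * w)"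
  proof (cases "\<bar>w\<bar> < 2*e")
    case True
    have "\<bar>t * w\<bar> \<le> 2 * e * \<bar>t\<bar>" using True by (simp add: abs_mult mult.commute mult_left_mono)
    then have "A * (t*w)^2 - B * (t*w)^4 \<le> 1 - cos (t*w)" using QH et by auto
    then show ?thesis unfolding \<psi>_def using True by (simp add: algebra_simps eval_nat_numeral)
  next
    case False
    then show ?thesis unfolding \<psi>_def by simp
  qed
  have "t^2 * (w^2 * \<psi>) \<le> t^2 * (2 * x^2 * P x + 2 * y^2 * P y - 2 * x * y * (P x + P y))"
    using partb by (intro mult_left_mono) auto
  then show ?thesis using parta unfolding w_def P_def by linarith
qed

lemma (in prob_space) hbi_const: "has_bochner_integral M (\<lambda>_. c::real) c"
  using has_bochner_integral_iff[of M "\<lambda>_. c" c] by (simp add: prob_space)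

lemma (in prob_space) hbi_int: "integrable M f \<Longrightarrow> has_bochner_integral M f (integral\<^sup>L M f)"
  by (simp add: has_bochner_integral_iff)

lemma (in prob_space) char_sq_bound:
  fixes X :: "'a \<Rightarrow> real" and P :: "real \<Rightarrow> real"
  assumes Xm[measurable]: "X \<in> borel_measurable M" and iX: "integrable M X"
    and iX2: "integrable M (\<lambda>\<omega>. (X \<omega>)^2)" and m0: "expectation X = 0"
    and Pm[measurable]: "P \<in> borel_measurable borel" and P0: "\<And>x. 0 \<le> P x" and PA: "\<And>x. P x \<le> c"
    and PW: "\<And>x y. A* t^2*(x-y)^2 - t^2*(2* x^2* P x + 2* y^2* P y - 2* x* y*(P x + P y)) \<le> 1 - cos (t*(x-y))"
  shows "(LINT \<omega>|M. cos (t * X \<omega>))^2 + (LINT \<omega>|M. sin (t * X \<omega>))^2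
     \<le> 1 - 2* A* t^2 * expectation (\<lambda>\<omega>. (X \<omega>)^2) + 4* t^2 * expectation (\<lambda>\<omega>. (X \<omega>)^2 * P (X \<omega>))"
proof -
  define C where "C = (LINT \<omega>|M. cos (t * X \<omega>))"
  define S where "S = (LINT \<omega>|M. sin (t * X \<omega>))"
  define vv2 where "vv2 = expectation (\<lambda>\<omega>. (X \<omega>)^2)"
  define V where "V = expectation (\<lambda>\<omega>. (X \<omega>)^2 * P (X \<omega>))"
  define W where "W = expectation (\<lambda>\<omega>. X \<omega> * P (X \<omega>))"
  have c0: "0 \<le> c" using P0[of 0] PA[of 0] by linarith
  have iC: "integrable M (\<lambda>\<omega>. cos (t * X \<omega>))"
    by (rule integrable_const_bound[where B=1]) auto
  have iS: "integrable M (\<lambda>\<omega>. sin (t * X \<omega>))"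
    by (rule integrable_const_bound[where B=1]) auto
  have iV: "integrable M (\<lambda>\<omega>. (X \<omega>)^2 * P (X \<omega>))"
  proof (rule Bochner_Integration.integrable_bound[OF integrable_mult_right[OF iX2, of c]])
    show "(\<lambda>\<omega>. (X \<omega>)^2 * P (X \<omega>)) \<in> borel_measurable M" by measurable
    show "AE x in M. norm ((X x)^2 * P (X x)) \<le> norm (c * (X x)^2)"
    proof (intro AE_I2)
      fix x
      have "(X x)^2 * P (X x) \<le> (X x)^2 * c" using PA by (intro mult_left_mono) auto
      then show "norm ((X x)^2 * P (X x)) \<le> norm (c * (X x)^2)"
        using P0[of "X x"] c0 by (simp add: abs_mult mult.commute)
    qed
  qed
  have iW: "integrable M (\<lambda>\<omega>. X \<omega> * P (X \<omega>))"
  proof (rule Bochner_Integration.integrable_bound[OF integrable_mult_right[OF iX, of c]])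
    show "(\<lambda>\<omega>. X \<omega> * P (X \<omega>)) \<in> borel_measurable M" by measurable
    show "AE x in M. norm (X x * P (X x)) \<le> norm (c * X x)"
    proof (intro AE_I2)
      fix x
      have "\<bar>X x\<bar> * P (X x) \<le> \<bar>X x\<bar> * c" using PA by (intro mult_left_mono) auto
      then show "norm (X x * P (X x)) \<le> norm (c * X x)"
        using P0[of "X x"] c0 by (simp add: abs_mult mult.commute)
    qed
  qed
  have hC: "has_bochner_integral M (\<lambda>\<omega>. cos (t * X \<omega>)) C" using iC C_def hbi_int by simp
  have hS: "has_bochner_integral M (\<lambda>\<omega>. sin (t * X \<omega>)) S" using iS S_def hbi_int by simp
  have hX: "has_bochner_integral M X 0" using hbi_int[OF iX] m0 by simp
  have hX2: "has_bochner_integral M (\<lambda>\<omega>. (X \<omega>)^2) vv2" using iX2 vv2_def hbi_int by simp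
  have hV: "has_bochner_integral M (\<lambda>\<omega>. (X \<omega>)^2 * P (X \<omega>)) V" using iV V_def hbi_int by simp
  have hW: "has_bochner_integral M (\<lambda>\<omega>. X \<omega> * P (X \<omega>)) W" using iW W_def hbi_int by simp
  have step1: "A* t^2* vv2 + A* t^2* y^2 - 2* t^2* V - 2* t^2*(y^2 * P y) + 2* t^2* W* y
      \<le> 1 - cos (t* y) * C - sin (t* y) * S" for y
  proof -
    have h1: "has_bochner_integral M (\<lambda>\<omega>. A* t^2*(X \<omega>)^2 + A* t^2* y^2 - 2* t^2*((X \<omega>)^2 * P (X \<omega>))
        - 2* t^2*(y^2 * P y) + 2* t^2* y*(X \<omega> * P (X \<omega>)) + 2* t^2*(y * P y) * X \<omega> - 2* A* t^2* y * X \<omega>)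
       (A* t^2* vv2 + A* t^2* y^2 - 2* t^2* V - 2* t^2*(y^2 * P y) + 2* t^2* y* W + 2* t^2*(y * P y) * 0 - 2* A* t^2* y*0)"
      by (intro has_bochner_integral_add has_bochner_integral_diff has_bochner_integral_mult_right
          hbi_const hX hX2 hV hW)
    have h2: "has_bochner_integral M (\<lambda>\<omega>. 1 - cos (t* y) * cos (t * X \<omega>) - sin (t* y) * sin (t * X \<omega>))
        (1 - cos (t* y) * C - sin (t* y) * S)"
      by (intro has_bochner_integral_add has_bochner_integral_diff has_bochner_integral_mult_right
          hbi_const hC hS)
    have "integral\<^sup>L M (\<lambda>\<omega>. A* t^2*(X \<omega>)^2 + A* t^2* y^2 - 2* t^2*((X \<omega>)^2 * P (X \<omega>))
        - 2* t^2*(y^2 * P y) + 2* t^2* y*(X \<omega> * P (X \<omega>)) + 2* t^2*(y * P y) * X \<omega> - 2* A* t^2* y * X \<omega>)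
      \<le> integral\<^sup>L M (\<lambda>\<omega>. 1 - cos (t* y) * cos (t * X \<omega>) - sin (t* y) * sin (t * X \<omega>))"
    proof (rule integral_mono)
      show "integrable M (\<lambda>\<omega>. A* t^2*(X \<omega>)^2 + A* t^2* y^2 - 2* t^2*((X \<omega>)^2 * P (X \<omega>))
        - 2* t^2*(y^2 * P y) + 2* t^2* y*(X \<omega> * P (X \<omega>)) + 2* t^2*(y * P y) * X \<omega> - 2* A* t^2* y * X \<omega>)"
        using h1 has_bochner_integral_iff by blast
      show "integrable M (\<lambda>\<omega>. 1 - cos (t* y) * cos (t * X \<omega>) - sin (t* y) * sin (t * X \<omega>))"
        using h2 has_bochner_integral_iff by blast
      fix \<omega>
      have "cos (t * (X \<omega> - y)) = cos (t* y) * cos (t * X \<omega>) + sin (t* y) * sin (t * X \<omega>)"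
        by (simp add: right_diff_distrib cos_diff)
      then show "A* t^2*(X \<omega>)^2 + A* t^2* y^2 - 2* t^2*((X \<omega>)^2 * P (X \<omega>))
        - 2* t^2*(y^2 * P y) + 2* t^2* y*(X \<omega> * P (X \<omega>)) + 2* t^2*(y * P y) * X \<omega> - 2* A* t^2* y * X \<omega>
        \<le> 1 - cos (t* y) * cos (t * X \<omega>) - sin (t* y) * sin (t * X \<omega>)"
        using PW[of "X \<omega>" y] by (simp add: algebra_simps power2_eq_square)
    qed
    then show ?thesis
      using has_bochner_integral_integral_eq[OF h1] has_bochner_integral_integral_eq[OF h2]
      by (simp add: algebra_simps)
  qed
  have h3: "has_bochner_integral M (\<lambda>\<omega>. A* t^2* vv2 + A* t^2*(X \<omega>)^2 - 2* t^2* V - 2* t^2*((X \<omega>)^2 * P (X \<omega>)) + 2* t^2* W* X \<omega>)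
     (A* t^2* vv2 + A* t^2* vv2 - 2* t^2* V - 2* t^2* V + 2* t^2* W*0)"
    by (intro has_bochner_integral_add has_bochner_integral_diff has_bochner_integral_mult_right
          hbi_const hX hX2 hV)
  have h4: "has_bochner_integral M (\<lambda>\<omega>. 1 - cos (t* X \<omega>) * C - sin (t* X \<omega>) * S) (1 - C * C - S * S)"
    by (intro has_bochner_integral_add has_bochner_integral_diff has_bochner_integral_mult_left
          hbi_const hC hS)
  have "integral\<^sup>L M (\<lambda>\<omega>. A* t^2* vv2 + A* t^2*(X \<omega>)^2 - 2* t^2* V - 2* t^2*((X \<omega>)^2 * P (X \<omega>)) + 2* t^2* W* X \<omega>)
      \<le> integral\<^sup>L M (\<lambda>\<omega>. 1 - cos (t* X \<omega>) * C - sin (t* X \<omega>) * S)"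
  proof (rule integral_mono)
    show "integrable M (\<lambda>\<omega>. A* t^2* vv2 + A* t^2*(X \<omega>)^2 - 2* t^2* V - 2* t^2*((X \<omega>)^2 * P (X \<omega>)) + 2* t^2* W* X \<omega>)"
      using h3 has_bochner_integral_iff by blast
    show "integrable M (\<lambda>\<omega>. 1 - cos (t* X \<omega>) * C - sin (t* X \<omega>) * S)"
      using h4 has_bochner_integral_iff by blast
    fix \<omega> show "A* t^2* vv2 + A* t^2*(X \<omega>)^2 - 2* t^2* V - 2* t^2*((X \<omega>)^2 * P (X \<omega>)) + 2* t^2* W* X \<omega>
      \<le> 1 - cos (t* X \<omega>) * C - sin (t* X \<omega>) * S"
      using step1[of "X \<omega>"] by (simp add: algebra_simps)
  qed
  then have "A* t^2* vv2 + A* t^2* vv2 - 2* t^2* V - 2* t^2* V \<le> 1 - C * C - S * S"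
    using has_bochner_integral_integral_eq[OF h3] has_bochner_integral_integral_eq[OF h4] by simp
  then show ?thesis unfolding C_def[symmetric] S_def[symmetric] vv2_def[symmetric] V_def[symmetric]
    by (simp add: power2_eq_square algebra_simps)
qed

lemma harm_sqrt: "(\<Sum>i\<in>{1..n}. 1 / real i) \<le> 2 * sqrt (real n)"
proof (induction n)
  case 0 then show ?case by simp
next
  case (Suc n)
  have b1: "sqrt (real n + 1) \<ge> 1" by simp
  have a0: "sqrt (real n) \<ge> 0" by simp
  have ab: "sqrt (real n) \<le> sqrt (real n + 1)" by simp
  have sq: "(sqrt (real n + 1))^2 - (sqrt (real n))^2 = 1" by simp
  have "1 / (real n + 1) \<le> 2 * (sqrt (real n + 1) - sqrt (real n))"
  proof -
    have "(sqrt (real n + 1) - sqrt (real n)) * (sqrt (real n + 1) + sqrt (real n)) = 1"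
      using sq by (simp add: power2_eq_square algebra_simps)
    moreover have "sqrt (real n + 1) + sqrt (real n) \<le> 2 * (real n + 1)"
    proof -
      have "sqrt (real n + 1) * 1 \<le> sqrt (real n + 1) * sqrt (real n + 1)"
        using b1 by (intro mult_left_mono) auto
      then have "sqrt (real n + 1) \<le> real n + 1" by simp
      then show ?thesis using ab by (smt (verit))
    qed
    moreover have "sqrt (real n + 1) + sqrt (real n) > 0" using b1 a0 by linarith
    ultimately show ?thesis
    proof -
      assume h1: "(sqrt (real n + 1) - sqrt (real n)) * (sqrt (real n + 1) + sqrt (real n)) = 1"
        and h2: "sqrt (real n + 1) + sqrt (real n) \<le> 2 * (real n + 1)"
        and h3: "sqrt (real n + 1) + sqrt (real n) > 0"
      have e1: "sqrt (real n + 1) - sqrt (real n) = 1 / (sqrt (real n + 1) + sqrt (real n))"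
        using h1 h3 by (simp add: field_simps)
      have "1 / (real n + 1) = 2 / (2 * (real n + 1))"
        by (simp add: divide_simps)
      also have "\<dots> \<le> 2 / (sqrt (real n + 1) + sqrt (real n))"
        using h2 h3 by (intro divide_left_mono) auto
      also have "\<dots> = 2 * (sqrt (real n + 1) - sqrt (real n))"
        unfolding e1 by simp
      finally show ?thesis .
    qed
  qed
  then show ?case using Suc by (simp add: add.commute)
qed

lemma min_stair:
  fixes z :: "nat \<Rightarrow> real"
  assumes "z 0 = 0" "\<And>i. z i \<le> z (Suc i)" "\<And>i. 0 \<le> z i"
  shows "min (v^2) ((z N)^2) \<le> (\<Sum>i<N. ((z (Suc i))^2 - (z i)^2) * indicator {x. z i \<le> \<bar>x\<bar>} v)"
proof (induction N)
  case 0 then show ?case using assms by simp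
next
  case (Suc N)
  have zz: "(z N)^2 \<le> (z (Suc N))^2" using assms by (intro power_mono) auto
  show ?case
  proof (cases "z N \<le> \<bar>v\<bar>")
    case True
    have "(z N)^2 \<le> v^2" using True assms abs_le_square_iff[of "z N" v] by simp
    then have "min (v^2) ((z N)^2) = (z N)^2" by simp
    then show ?thesis using Suc True zz by auto
  next
    case False
    have "v^2 \<le> (z N)^2" using False assms abs_le_square_iff[of v "z N"] by simp
    then show ?thesis using Suc False zz by auto
  qed
qed

lemma (in prob_space) sigma2z_nonneg: "sigma2z M X k z \<ge> 0"
  unfolding sigma2z_def by (intro integral_nonneg_AE) (auto simp: indicator_def)

lemma (in prob_space) integrable_sq_ind:
  fixes X :: "nat \<Rightarrow> 'a \<Rightarrow> real"
  assumes "X k \<in> borel_measurable M" "integrable M (\<lambda>\<omega>. (X k \<omega>)^2)" and S: "S \<in> sets borel"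
  shows "integrable M (\<lambda>\<omega>. (X k \<omega>)^2 * indicator S (X k \<omega>))"
proof (rule Bochner_Integration.integrable_bound[OF assms(2)])
  show "(\<lambda>\<omega>. (X k \<omega>)^2 * indicator S (X k \<omega>)) \<in> borel_measurable M"
    using assms(1) S by measurable
  show "AE x in M. norm ((X k x)^2 * indicator S (X k x)) \<le> norm ((X k x)^2)"
    by (intro AE_I2) (auto simp: indicator_def)
qed

lemma set_abs_ge_borel[measurable]: "{x::real. z \<le> \<bar>x\<bar>} \<in> sets borel"
  by measurable


lemma (in prob_space) grid_bound:
  fixes X :: "nat \<Rightarrow> 'a \<Rightarrow> real" and I :: "nat set" and e L3 :: real
  assumes fin: "finite I" and Xm: "\<And>k. k \<in> I \<Longrightarrow> X k \<in> borel_measurable M"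
    and iX2: "\<And>k. k \<in> I \<Longrightarrow> integrable M (\<lambda>\<omega>. (X k \<omega>)^2)"
    and tot: "(\<Sum>k\<in>I. expectation (\<lambda>\<omega>. (X k \<omega>)^2)) = 1"
    and e: "e > 0"
    and Lb: "\<And>z. 0 < z \<Longrightarrow> z \<le> e \<Longrightarrow> z * (\<Sum>k\<in>I. sigma2z M X k z) \<le> L3"
  shows "(\<Sum>k\<in>I. expectation (\<lambda>\<omega>. (X k \<omega>)^2 * min ((X k \<omega>)^2) (e^2))) \<le> 2 * e * L3"
proof -
  define S where "S = (\<Sum>k\<in>I. expectation (\<lambda>\<omega>. (X k \<omega>)^2 * min ((X k \<omega>)^2) (e^2)))"
  have "0 \<le> e * (\<Sum>k\<in>I. sigma2z M X k e)"
    using e by (intro mult_nonneg_nonneg sum_nonneg sigma2z_nonneg) auto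
  then have L30: "L3 \<ge> 0" using Lb[of e] e by linarith
  have bound: "S \<le> 2 * e * L3 + (e^2 + 2 * e * L3) / sqrt (real N)" if N: "N \<ge> 1" for N
  proof -
    define z where "z i = real i * e / real N" for i
    have z0: "z 0 = 0" unfolding z_def by simp
    have zmono: "z i \<le> z (Suc i)" for i unfolding z_def using e N by (simp add: divide_right_mono)
    have zpos: "0 \<le> z i" for i unfolding z_def using e N by simp
    have zN: "z N = e" unfolding z_def using N by simp
    define c where "c i = (z (Suc i))^2 - (z i)^2" for i
    have c_eq: "c i = (2 * real i + 1) * (e / real N)^2" for i
      unfolding c_def z_def using N by (simp add: power2_eq_square field_simps)
    have c0: "c i \<ge> 0" for i unfolding c_eq by simp
    have step1: "expectation (\<lambda>\<omega>. (X k \<omega>)^2 * min ((X k \<omega>)^2) (e^2))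
        \<le> (\<Sum>i<N. c i * sigma2z M X k (z i))" if k: "k \<in> I" for k
    proof -
      have iI: "integrable M (\<lambda>\<omega>. (X k \<omega>)^2 * indicator {x. z i \<le> \<bar>x\<bar>} (X k \<omega>))" for i
        by (rule integrable_sq_ind[of X k, OF Xm[OF k] iX2[OF k]]) measurable
      have "expectation (\<lambda>\<omega>. (X k \<omega>)^2 * min ((X k \<omega>)^2) (e^2))
          \<le> expectation (\<lambda>\<omega>. \<Sum>i<N. c i * ((X k \<omega>)^2 * indicator {x. z i \<le> \<bar>x\<bar>} (X k \<omega>)))"
      proof (rule integral_mono)
        show "integrable M (\<lambda>\<omega>. \<Sum>i<N. c i * ((X k \<omega>)^2 * indicator {x. z i \<le> \<bar>x\<bar>} (X k \<omega>)))"
          by (rule Bochner_Integration.integrable_sum, rule integrable_mult_right, rule iI)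
        show "integrable M (\<lambda>\<omega>. (X k \<omega>)^2 * min ((X k \<omega>)^2) (e^2))"
        proof (rule Bochner_Integration.integrable_bound[OF integrable_mult_right[OF iX2[OF k], of "e^2"]])
          show "(\<lambda>\<omega>. (X k \<omega>)^2 * min ((X k \<omega>)^2) (e^2)) \<in> borel_measurable M"
            using Xm[OF k] by measurable
          show "AE x in M. norm ((X k x)^2 * min ((X k x)^2) (e^2)) \<le> norm (e^2 * (X k x)^2)"
          proof (intro AE_I2)
            fix x
            have "(X k x)^2 * min ((X k x)^2) (e^2) \<le> (X k x)^2 * e^2" by (intro mult_left_mono) auto
            then show "norm ((X k x)^2 * min ((X k x)^2) (e^2)) \<le> norm (e^2 * (X k x)^2)"
              by (simp add: abs_mult mult.commute)
          qed
        qed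
        fix \<omega>
        have "min ((X k \<omega>)^2) ((z N)^2) \<le> (\<Sum>i<N. c i * indicator {x. z i \<le> \<bar>x\<bar>} (X k \<omega>))"
          using min_stair[of z "X k \<omega>" N] z0 zmono zpos unfolding c_def by simp
        then have "(X k \<omega>)^2 * min ((X k \<omega>)^2) ((z N)^2) \<le> (X k \<omega>)^2 * (\<Sum>i<N. c i * indicator {x. z i \<le> \<bar>x\<bar>} (X k \<omega>))"
          by (intro mult_left_mono) auto
        then show "(X k \<omega>)^2 * min ((X k \<omega>)^2) (e^2) \<le> (\<Sum>i<N. c i * ((X k \<omega>)^2 * indicator {x. z i \<le> \<bar>x\<bar>} (X k \<omega>)))"
          unfolding zN sum_distrib_left by (simp add: mult.left_commute del: sum_mult_indicator)
      qed
      also have "\<dots> = (\<Sum>i<N. c i * sigma2z M X k (z i))"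
        using iI by (simp add: Bochner_Integration.integral_sum sigma2z_def)
      finally show ?thesis .
    qed
    have "S \<le> (\<Sum>k\<in>I. \<Sum>i<N. c i * sigma2z M X k (z i))"
      unfolding S_def using step1 by (intro sum_mono) auto
    also have "\<dots> = (\<Sum>i<N. c i * (\<Sum>k\<in>I. sigma2z M X k (z i)))"
      by (simp add: sum.swap[of _ I] sum_distrib_left)
    also have "\<dots> = c 0 * (\<Sum>k\<in>I. sigma2z M X k (z 0)) + (\<Sum>i\<in>{1..<N}. c i * (\<Sum>k\<in>I. sigma2z M X k (z i)))"
    proof -
      have "{..<N} = insert 0 {1..<N}" using N by auto
      then show ?thesis by simp
    qed
    also have "\<dots> \<le> (e / real N)^2 + (\<Sum>i\<in>{1..<N}. L3 * (e / real N) * (2 + 1 / real i))"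
    proof (rule add_mono)
      have "sigma2z M X k 0 = expectation (\<lambda>\<omega>. (X k \<omega>)^2)" for k
        unfolding sigma2z_def by (simp add: indicator_def)
      then show "c 0 * (\<Sum>k\<in>I. sigma2z M X k (z 0)) \<le> (e / real N)^2"
        using tot z0 c_eq[of 0] by simp
      show "(\<Sum>i\<in>{1..<N}. c i * (\<Sum>k\<in>I. sigma2z M X k (z i))) \<le> (\<Sum>i\<in>{1..<N}. L3 * (e / real N) * (2 + 1 / real i))"
      proof (rule sum_mono)
        fix i assume i: "i \<in> {1..<N}"
        have zi: "0 < z i" "z i \<le> e" unfolding z_def using i e by (auto simp: divide_le_eq)
        have "z i * (\<Sum>k\<in>I. sigma2z M X k (z i)) \<le> L3" using Lb zi by auto
        then have "(\<Sum>k\<in>I. sigma2z M X k (z i)) \<le> L3 / z i" using zi by (simp add: le_divide_eq mult.commute)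
        then have "c i * (\<Sum>k\<in>I. sigma2z M X k (z i)) \<le> c i * (L3 / z i)" using c0 by (intro mult_left_mono) auto
        also have "c i * (L3 / z i) = L3 * (e / real N) * (2 + 1 / real i)"
          unfolding c_eq z_def using i e by (simp add: field_simps power2_eq_square)
        finally show "c i * (\<Sum>k\<in>I. sigma2z M X k (z i)) \<le> L3 * (e / real N) * (2 + 1 / real i)" .
      qed
    qed
    also have "\<dots> \<le> (e / real N)^2 + L3 * (e / real N) * (2 * real N + 2 * sqrt (real N))"
    proof -
      have "(\<Sum>i\<in>{1..<N}. L3 * (e / real N) * (2 + 1 / real i)) = L3 * (e / real N) * (\<Sum>i\<in>{1..<N}. (2 + 1 / real i))"
        by (simp add: sum_distrib_left)
      moreover have "(\<Sum>i\<in>{1..<N}. (2 + 1 / real i)) \<le> 2 * real N + 2 * sqrt (real N)"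
      proof -
        have "(\<Sum>i\<in>{1..<N}. (2 + 1 / real i)) = 2 * real (N - 1) + (\<Sum>i\<in>{1..<N}. 1 / real i)"
          by (simp add: sum.distrib)
        moreover have "(\<Sum>i\<in>{1..<N}. 1 / real i) \<le> (\<Sum>i\<in>{1..N}. 1 / real i)"
          by (intro sum_mono2) auto
        moreover have "2 * real (N - 1) \<le> 2 * real N" by simp
        ultimately show ?thesis using harm_sqrt[of N] by linarith
      qed
      moreover have "L3 * (e / real N) \<ge> 0" using L30 e by simp
      ultimately show ?thesis by (metis add_left_mono mult_left_mono)
    qed
    also have "\<dots> \<le> 2 * e * L3 + (e^2 + 2 * e * L3) / sqrt (real N)"
    proof -
      have sN: "sqrt (real N) \<ge> 1" using N by simp
      have sN2: "sqrt (real N) * sqrt (real N) = real N" by simp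
      have "(e / real N)^2 \<le> e^2 / sqrt (real N)"
      proof -
        have "sqrt (real N) \<le> real N" using sN sN2 by (smt (verit) mult_le_cancel_left1)
        also have "real N \<le> (real N)^2" using N by (simp add: power2_eq_square)
        finally have "sqrt (real N) \<le> (real N)^2" .
        then have "e^2 / (real N)^2 \<le> e^2 / sqrt (real N)" using sN by (intro divide_left_mono) auto
        then show ?thesis by (simp add: power_divide)
      qed
      moreover have "L3 * (e / real N) * (2 * real N + 2 * sqrt (real N)) = 2 * e * L3 + 2 * e * L3 / sqrt (real N)"
        using N sN sN2 by (simp add: field_simps)
      ultimately show ?thesis by (simp add: add_divide_distrib)
    qed
    finally show ?thesis .
  qed
  show ?thesis
  proof (rule ccontr)
    assume "\<not> ?thesis"
    then have d: "S - 2 * e * L3 > 0" unfolding S_def by simp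
    define c where "c = e^2 + 2 * e * L3"
    have cpos: "c > 0" unfolding c_def using e L30 by (simp add: add_pos_nonneg)
    define N where "N = nat (ceiling ((c / (S - 2 * e * L3))^2)) + 1"
    have N1: "N \<ge> 1" unfolding N_def by simp
    have "(c / (S - 2 * e * L3))^2 < real N" unfolding N_def by linarith
    then have "c / (S - 2 * e * L3) < sqrt (real N)" using d cpos real_less_rsqrt by blast
    then have "c / sqrt (real N) < S - 2 * e * L3"
      using d cpos N1 by (simp add: divide_less_eq mult.commute)
    then show False using bound[OF N1] unfolding c_def by linarith
  qed
qed

lemma (in prob_space) fchar_sq:
  fixes X :: "nat \<Rightarrow> 'a \<Rightarrow> real"
  assumes [measurable]: "X k \<in> borel_measurable M"
  shows "(cmod (fchar M X k t))^2 = (LINT \<omega>|M. cos (t * X k \<omega>))^2 + (LINT \<omega>|M. sin (t * X k \<omega>))^2"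
proof -
  have "fchar M X k t = (CLINT \<omega>|M. iexp (t * X k \<omega>))"
    unfolding fchar_def char_def by (subst integral_distr) auto
  moreover have "Re (CLINT \<omega>|M. iexp (t * X k \<omega>)) = (LINT \<omega>|M. Re (iexp (t * X k \<omega>)))"
    by (rule integral_Re[symmetric]) (rule integrable_const_bound[where B=1], auto)
  moreover have "(LINT \<omega>|M. Re (iexp (t * X k \<omega>))) = (LINT \<omega>|M. cos (t * X k \<omega>))"
    by (simp add: Re_exp)
  moreover have "Im (CLINT \<omega>|M. iexp (t * X k \<omega>)) = (LINT \<omega>|M. Im (iexp (t * X k \<omega>)))"
    by (rule integral_Im[symmetric]) (rule integrable_const_bound[where B=1], auto)
  moreover have "(LINT \<omega>|M. Im (iexp (t * X k \<omega>))) = (LINT \<omega>|M. sin (t * X k \<omega>))"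
    by (simp add: Im_exp)
  ultimately show ?thesis by (simp add: cmod_power2)
qed

lemma (in prob_space) fchar_le1:
  fixes X :: "nat \<Rightarrow> 'a \<Rightarrow> real"
  assumes "X k \<in> borel_measurable M"
  shows "cmod (fchar M X k t) \<le> 1"
  unfolding fchar_def using assms by (intro real_distribution.cmod_char_le_1) auto

lemma (in prob_space) fbar_le1:
  fixes X :: "nat \<Rightarrow> 'a \<Rightarrow> real"
  assumes "\<And>k. k \<in> {1..n} \<Longrightarrow> X k \<in> borel_measurable M"
  shows "cmod (fbar M X n t) \<le> 1"
proof -
  have "cmod (fbar M X n t) = (\<Prod>k\<in>{1..n}. cmod (fchar M X k t))"
    unfolding fbar_def by (simp add: prod_norm)
  also have "\<dots> \<le> (\<Prod>k\<in>{1..n}. 1)"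
    using assms fchar_le1 by (intro prod_mono) auto
  finally show ?thesis by simp
qed


lemma (in prob_space) key:
  fixes X :: "nat \<Rightarrow> 'a \<Rightarrow> real" and \<theta> t e L3 :: real
  assumes Xm: "\<And>k. k \<in> {1..n} \<Longrightarrow> X k \<in> borel_measurable M"
    and iX: "\<And>k. k \<in> {1..n} \<Longrightarrow> integrable M (X k)"
    and iX2: "\<And>k. k \<in> {1..n} \<Longrightarrow> integrable M (\<lambda>\<omega>. (X k \<omega>)^2)"
    and m0: "\<And>k. k \<in> {1..n} \<Longrightarrow> (LINT \<omega>|M. X k \<omega>) = 0"
    and tot: "(\<Sum>k\<in>{1..n}. LINT \<omega>|M. (X k \<omega>)^2) = 1"
    and th: "0 < \<theta>" "\<theta> < 2*pi" and e: "e > 0" and et: "2 * e * \<bar>t\<bar> \<le> sqrt (afun \<theta> / bfun \<theta>)"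
    and Lb: "\<And>z. 0 < z \<Longrightarrow> z \<le> e \<Longrightarrow> z * Ln M X n z \<le> L3"
  shows "cmod (fbar M X n t) \<le> exp (- (afun \<theta> - 2 * L3 / e * (afun \<theta> + 4 * bfun \<theta> * t^2 * e^2)) * t^2)"
proof -
  define A where "A = afun \<theta>"
  define B where "B = bfun \<theta>"
  have A: "A > 0" unfolding A_def using afun_pos th by auto
  have B: "B > 0" unfolding B_def using bfun_pos th by auto
  define P where "P = Pfun A B t e"
  have QH: "A * y^2 - B * y^4 \<le> 1 - cos y" if "\<bar>y\<bar> \<le> sqrt (A / B)" for y
    unfolding A_def B_def using quartic_bound th that unfolding A_def B_def by auto
  have et': "2 * e * \<bar>t\<bar> \<le> sqrt (A / B)" using et unfolding A_def B_def .
  have PW: "A * t^2 * (x-y)^2 - t^2 * (2 * x^2 * P x + 2 * y^2 * P y - 2 * x * y * (P x + P y))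
      \<le> 1 - cos (t * (x-y))" for x y
    unfolding P_def by (rule pw_bound[OF A B e et' QH])
  have et2: "4 * B * t^2 * e^2 \<le> A"
  proof -
    have "(2 * e * \<bar>t\<bar>)^2 \<le> (sqrt (A/B))^2" using et' e by (intro power_mono) auto
    then have "4 * e^2 * t^2 \<le> A / B" using A B by (simp add: power_mult_distrib power2_abs)
    then show ?thesis using B by (simp add: le_divide_eq algebra_simps)
  qed
  have Pm: "P \<in> borel_measurable borel" unfolding P_def Pfun_def by measurable
  have P0: "0 \<le> P x" for x unfolding P_def Pfun_def using A B by auto
  have PA: "P x \<le> A" for x
  proof (cases "\<bar>x\<bar> < e")
    case True
    have "x^2 \<le> e^2" using True e abs_le_square_iff[of x e] by simp
    then have "4 * B * t^2 * x^2 \<le> 4 * B * t^2 * e^2" using B by (intro mult_left_mono) auto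
    then show ?thesis unfolding P_def Pfun_def using True et2 by simp
  next
    case False then show ?thesis unfolding P_def Pfun_def by simp
  qed
  define Em where "Em k = expectation (\<lambda>\<omega>. (X k \<omega>)^2 * min ((X k \<omega>)^2) (e^2))" for k
  define s2 where "s2 k = expectation (\<lambda>\<omega>. (X k \<omega>)^2)" for k
  define V where "V k = expectation (\<lambda>\<omega>. (X k \<omega>)^2 * P (X k \<omega>))" for k
  have per: "(cmod (fchar M X k t))^2 \<le> 1 - 2 * A * t^2 * s2 k + 4 * t^2 * V k" if k: "k \<in> {1..n}" for k
    unfolding fchar_sq[of X k, OF Xm[OF k]] s2_def V_def
    by (rule char_sq_bound[OF Xm[OF k] iX[OF k] iX2[OF k] m0[OF k] Pm P0 PA PW])
  have Vk: "V k = 4 * B * t^2 * Em k + (A - 4 * B * t^2 * e^2) * sigma2z M X k e" if k: "k \<in> {1..n}" for k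
  proof -
    have i1: "integrable M (\<lambda>\<omega>. (X k \<omega>)^2 * min ((X k \<omega>)^2) (e^2))"
    proof (rule Bochner_Integration.integrable_bound[OF integrable_mult_right[OF iX2[OF k], of "e^2"]])
      show "(\<lambda>\<omega>. (X k \<omega>)^2 * min ((X k \<omega>)^2) (e^2)) \<in> borel_measurable M"
        using Xm[OF k] by measurable
      show "AE x in M. norm ((X k x)^2 * min ((X k x)^2) (e^2)) \<le> norm (e^2 * (X k x)^2)"
      proof (intro AE_I2)
        fix x
        have "(X k x)^2 * min ((X k x)^2) (e^2) \<le> (X k x)^2 * e^2" by (intro mult_left_mono) auto
        then show "norm ((X k x)^2 * min ((X k x)^2) (e^2)) \<le> norm (e^2 * (X k x)^2)"
          by (simp add: abs_mult mult.commute)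
      qed
    qed
    have i2: "integrable M (\<lambda>\<omega>. (X k \<omega>)^2 * indicator {x. e \<le> \<bar>x\<bar>} (X k \<omega>))"
      by (rule integrable_sq_ind[of X k, OF Xm[OF k] iX2[OF k]]) measurable
    have "V k = expectation (\<lambda>\<omega>. 4 * B * t^2 * ((X k \<omega>)^2 * min ((X k \<omega>)^2) (e^2))
        + (A - 4 * B * t^2 * e^2) * ((X k \<omega>)^2 * indicator {x. e \<le> \<bar>x\<bar>} (X k \<omega>)))"
      unfolding V_def
    proof (rule Bochner_Integration.integral_cong[OF refl])
      fix \<omega>
      show "(X k \<omega>)^2 * P (X k \<omega>) = 4 * B * t^2 * ((X k \<omega>)^2 * min ((X k \<omega>)^2) (e^2))
        + (A - 4 * B * t^2 * e^2) * ((X k \<omega>)^2 * indicator {x. e \<le> \<bar>x\<bar>} (X k \<omega>))"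
      proof (cases "\<bar>X k \<omega>\<bar> < e")
        case True
        then have "(X k \<omega>)^2 \<le> e^2" using e abs_le_square_iff[of "X k \<omega>" e] by simp
        then show ?thesis unfolding P_def Pfun_def using True by (simp add: algebra_simps power2_eq_square)
      next
        case False
        then have "e^2 \<le> (X k \<omega>)^2" using e abs_le_square_iff[of e "X k \<omega>"] by simp
        then show ?thesis unfolding P_def Pfun_def using False by (simp add: algebra_simps power2_eq_square)
      qed
    qed
    also have "\<dots> = 4 * B * t^2 * Em k + (A - 4 * B * t^2 * e^2) * sigma2z M X k e"
      unfolding Em_def sigma2z_def using i1 i2 by simp
    finally show ?thesis .
  qed
  have L30: "L3 \<ge> 0"
  proof -
    have "0 \<le> e * Ln M X n e" unfolding Ln_def using e by (intro mult_nonneg_nonneg sum_nonneg sigma2z_nonneg) auto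
    then show ?thesis using Lb[of e] e by linarith
  qed
  have sumEm: "(\<Sum>k\<in>{1..n}. Em k) \<le> 2 * e * L3"
    unfolding Em_def
    by (rule grid_bound[OF _ Xm iX2 tot e]) (use Lb in \<open>auto simp: Ln_def\<close>)
  have Lne: "Ln M X n e \<le> L3 / e" using Lb[of e] e by (simp add: le_divide_eq mult.commute)
  have sumV: "(\<Sum>k\<in>{1..n}. V k) \<le> L3 * (A / e + 4 * B * t^2 * e)"
  proof -
    have "(\<Sum>k\<in>{1..n}. V k) = 4 * B * t^2 * (\<Sum>k\<in>{1..n}. Em k) + (A - 4 * B * t^2 * e^2) * Ln M X n e"
      using Vk by (simp add: sum.distrib sum_distrib_left Ln_def)
    also have "\<dots> \<le> 4 * B * t^2 * (2 * e * L3) + (A - 4 * B * t^2 * e^2) * (L3 / e)"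
      using sumEm Lne et2 B by (intro add_mono mult_left_mono) auto
    also have "\<dots> = L3 * (A / e + 4 * B * t^2 * e)"
      using e by (simp add: field_simps power2_eq_square)
    finally show ?thesis .
  qed
  define \<kappa> where "\<kappa> = A - 2 * L3 / e * (A + 4 * B * t^2 * e^2)"
  have "(cmod (fbar M X n t))^2 = (\<Prod>k\<in>{1..n}. (cmod (fchar M X k t))^2)"
    unfolding fbar_def by (simp add: prod_norm[symmetric] prod_power_distrib)
  also have "\<dots> \<le> (\<Prod>k\<in>{1..n}. exp (- (2 * A * t^2 * s2 k - 4 * t^2 * V k)))"
  proof (rule prod_mono)
    fix k assume k: "k \<in> {1..n}"
    have "1 - 2 * A * t^2 * s2 k + 4 * t^2 * V k \<le> exp (- (2 * A * t^2 * s2 k - 4 * t^2 * V k))"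
      using exp_ge_add_one_self[of "- (2 * A * t^2 * s2 k - 4 * t^2 * V k)"] by (simp add: algebra_simps)
    then show "0 \<le> (cmod (fchar M X k t))^2 \<and> (cmod (fchar M X k t))^2 \<le> exp (- (2 * A * t^2 * s2 k - 4 * t^2 * V k))"
      using per[OF k] by simp
  qed
  also have "\<dots> = exp (- (2 * A * t^2 * (\<Sum>k\<in>{1..n}. s2 k) - 4 * t^2 * (\<Sum>k\<in>{1..n}. V k)))"
    by (simp add: exp_sum[symmetric] sum_negf sum_subtractf sum_distrib_left)
  also have "\<dots> \<le> exp (- \<kappa> * t^2 * 2)"
  proof -
    have "(\<Sum>k\<in>{1..n}. s2 k) = 1" using tot unfolding s2_def .
    moreover have "4 * t^2 * (\<Sum>k\<in>{1..n}. V k) \<le> 4 * t^2 * (L3 * (A / e + 4 * B * t^2 * e))"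
      using sumV by (intro mult_left_mono) auto
    moreover have "2 * A * t^2 - 4 * t^2 * (L3 * (A / e + 4 * B * t^2 * e)) = \<kappa> * t^2 * 2"
      unfolding \<kappa>_def using e by (simp add: field_simps power2_eq_square)
    ultimately show ?thesis by simp
  qed
  also have "\<dots> = (exp (- \<kappa> * t^2))^2"
    by (simp add: exp_double[symmetric] power2_eq_square exp_add[symmetric])
  finally have "(cmod (fbar M X n t))^2 \<le> (exp (- \<kappa> * t^2))^2" .
  then have "cmod (fbar M X n t) \<le> exp (- \<kappa> * t^2)"
    by (rule power2_le_imp_le) simp
  then show ?thesis unfolding \<kappa>_def A_def B_def .
qed

lemma ln_le_iff_le_exp: "0 < (y::real) \<Longrightarrow> ln y \<le> c \<longleftrightarrow> y \<le> exp c"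
  by (metis exp_gt_zero ln_exp ln_le_cancel_iff)

lemma sup_exp:
  fixes g :: "real \<Rightarrow> real" and y s :: real and T :: "real set"
  assumes h: "\<And>\<theta>. \<theta> \<in> T \<Longrightarrow> y \<le> exp (- g \<theta> * s)" and s: "s > 0" and y0: "0 \<le> y" and y1: "y \<le> 1"
  shows "y \<le> exp (- real_of_ereal (SUP \<theta>\<in>T. ereal (g \<theta>)) * s)"
proof (cases "y = 0")
  case True then show ?thesis by simp
next
  case False
  then have yp: "y > 0" using y0 by simp
  have gle: "g \<theta> \<le> - ln y / s" if "\<theta> \<in> T" for \<theta>
  proof -
    have "ln y \<le> - g \<theta> * s" using h[OF that] yp by (simp add: ln_le_iff_le_exp)
    then have "g \<theta> * s \<le> - ln y" by linarith
    then show ?thesis using pos_le_divide_eq[OF s, of "g \<theta>" "- ln y"] by simp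
  qed
  have S: "(SUP \<theta>\<in>T. ereal (g \<theta>)) \<le> ereal (- ln y / s)"
    by (rule SUP_least) (use gle in auto)
  show ?thesis
  proof (cases "(SUP \<theta>\<in>T. ereal (g \<theta>))")
    case (real r)
    then have "r \<le> - ln y / s" using S by simp
    then have "r * s \<le> - ln y" using pos_le_divide_eq[OF s, of r "- ln y"] by simp
    then have "ln y \<le> - r * s" by linarith
    then have "y \<le> exp (- r * s)" using yp by (simp add: ln_le_iff_le_exp)
    then show ?thesis using real by simp
  next
    case PInf then show ?thesis using S by simp
  next
    case MInf then show ?thesis using y1 by simp
  qed
qed

lemma ab_sqrt:
  assumes "0 < \<theta>" "\<theta> < 2*pi"
  shows "afun \<theta> = bfun \<theta> * sqrt (afun \<theta> / bfun \<theta>) * sqrt (afun \<theta> / bfun \<theta>)"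
    and "sqrt (afun \<theta> * bfun \<theta>) = bfun \<theta> * sqrt (afun \<theta> / bfun \<theta>)"
proof -
  have a: "afun \<theta> > 0" and b: "bfun \<theta> > 0" using afun_pos bfun_pos assms by auto
  have "sqrt (afun \<theta> / bfun \<theta>) * sqrt (afun \<theta> / bfun \<theta>) = afun \<theta> / bfun \<theta>"
    using a b by simp
  then show "afun \<theta> = bfun \<theta> * sqrt (afun \<theta> / bfun \<theta>) * sqrt (afun \<theta> / bfun \<theta>)"
    using b by (simp add: mult.assoc)
  have "afun \<theta> * bfun \<theta> = (bfun \<theta>)^2 * (afun \<theta> / bfun \<theta>)" using b by (simp add: power2_eq_square)
  then have "sqrt (afun \<theta> * bfun \<theta>) = sqrt ((bfun \<theta>)^2) * sqrt (afun \<theta> / bfun \<theta>)"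
    by (metis real_sqrt_mult)
  then show "sqrt (afun \<theta> * bfun \<theta>) = bfun \<theta> * sqrt (afun \<theta> / bfun \<theta>)" using b by simp
qed

lemma afun_2pi: "afun (2*pi) = 0" and bfun_2pi: "bfun (2*pi) = 0"
  unfolding afun_def bfun_def by simp_all

lemma k1_pos_iff:
  assumes "\<tau> \<ge> 0"
  shows "k1 \<tau> > 0 \<longleftrightarrow> \<tau> < pi / 4"
proof
  assume "k1 \<tau> > 0"
  show "\<tau> < pi / 4"
  proof (rule ccontr)
    assume "\<not> \<tau> < pi / 4"
    then have t4: "8 * \<tau> \<ge> 2 * pi" by simp
    have "k1 \<tau> \<le> 0" unfolding k1_def
    proof (rule SUP_least)
      fix \<theta> assume th: "\<theta> \<in> {0<..2*pi}"
      show "ereal (afun \<theta> - 8 * \<tau> * sqrt (afun \<theta> * bfun \<theta>)) \<le> 0"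
      proof (cases "\<theta> = 2*pi")
        case True then show ?thesis by (simp add: afun_2pi bfun_2pi)
      next
        case False
        then have th': "0 < \<theta>" "\<theta> < 2*pi" using th by auto
        define r where "r = sqrt (afun \<theta> / bfun \<theta>)"
        have b: "bfun \<theta> > 0" using bfun_pos th' by auto
        have r: "0 \<le> r" "r \<le> 2*pi" unfolding r_def using sqrt_ab_le[OF th'] afun_pos[OF th'] b by auto
        have "afun \<theta> = bfun \<theta> * r * r" using ab_sqrt(1)[OF th'] unfolding r_def .
        moreover have "sqrt (afun \<theta> * bfun \<theta>) = bfun \<theta> * r" using ab_sqrt(2)[OF th'] unfolding r_def .
        moreover have "bfun \<theta> * r * r \<le> bfun \<theta> * r * (8 * \<tau>)"
          using b r t4 by (intro mult_left_mono) auto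
        ultimately show ?thesis by (simp add: algebra_simps)
      qed
    qed
    then show False using \<open>k1 \<tau> > 0\<close> by simp
  qed
next
  assume t: "\<tau> < pi / 4"
  define \<theta> where "\<theta> = (8 * \<tau> + 2 * pi) / 2"
  have th: "0 < \<theta>" "\<theta> < 2*pi" "8 * \<tau> < \<theta>" unfolding \<theta>_def using t assms by auto
  define r where "r = sqrt (afun \<theta> / bfun \<theta>)"
  have b: "bfun \<theta> > 0" using bfun_pos th by auto
  have r: "8 * \<tau> < r" unfolding r_def using sqrt_ab_gt[OF th(1,2)] th by linarith
  have "afun \<theta> = bfun \<theta> * r * r" using ab_sqrt(1)[OF th(1,2)] unfolding r_def .
  moreover have "sqrt (afun \<theta> * bfun \<theta>) = bfun \<theta> * r" using ab_sqrt(2)[OF th(1,2)] unfolding r_def .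
  moreover have "bfun \<theta> * r * (8 * \<tau>) < bfun \<theta> * r * r"
    using b r assms by (intro mult_strict_left_mono) auto
  ultimately have pos: "afun \<theta> - 8 * \<tau> * sqrt (afun \<theta> * bfun \<theta>) > 0" by (simp add: algebra_simps)
  have "ereal (afun \<theta> - 8 * \<tau> * sqrt (afun \<theta> * bfun \<theta>)) \<le> k1 \<tau>"
    unfolding k1_def using th by (intro SUP_upper) auto
  then show "k1 \<tau> > 0" using pos by (meson ereal_less(2) order_less_le_trans)
qed

lemma tau1_part:
  assumes L0: "L0 > 0" and eps: "eps > 0"
  shows "(\<exists>\<tau>::real. tau1 L0 eps \<le> ereal \<tau> \<and> \<tau> < pi / 4) \<longleftrightarrow> ereal L0 < cbrt_quarter eps"
proof (cases eps)
  case PInf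
  then show ?thesis unfolding tau1_def cbrt_quarter_def by (auto intro!: exI[of _ 0])
next
  case MInf then show ?thesis using eps by simp
next
  case (real \<epsilon>)
  then have e: "\<epsilon> > 0" using eps by simp
  have t1: "tau1 L0 (ereal \<epsilon>) = ereal (pi * L0^3 / \<epsilon>)" unfolding tau1_def using e by simp
  have "(\<exists>\<tau>::real. pi * L0^3 / \<epsilon> \<le> \<tau> \<and> \<tau> < pi / 4) \<longleftrightarrow> pi * L0^3 / \<epsilon> < pi / 4"
  proof
    assume "\<exists>\<tau>::real. pi * L0^3 / \<epsilon> \<le> \<tau> \<and> \<tau> < pi / 4"
    then obtain \<tau> where "pi * L0^3 / \<epsilon> \<le> \<tau>" "\<tau> < pi / 4" by blast
    then show "pi * L0^3 / \<epsilon> < pi / 4" by linarith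
  qed auto
  also have "\<dots> \<longleftrightarrow> L0^3 < \<epsilon> / 4" using e by (simp add: field_simps)
  also have "\<dots> \<longleftrightarrow> root 3 (L0^3) < root 3 (\<epsilon> / 4)" by simp
  also have "\<dots> \<longleftrightarrow> L0 < root 3 (\<epsilon> / 4)" using L0 by (simp add: real_root_power_cancel)
  finally show ?thesis unfolding real t1 cbrt_quarter_def by simp
qed


lemma delta_facts:
  fixes eps :: ereal and t r :: real
  assumes eps: "eps > 0" and t: "t \<noteq> 0" and r: "r > 0"
  defines "\<delta> \<equiv> real_of_ereal (min (2 * eps * ereal \<bar>t\<bar>) (ereal r))"
  shows "0 < \<delta>" "\<delta> \<le> r" "ereal (\<delta> / (2 * \<bar>t\<bar>)) \<le> eps"
    "\<delta> = r \<or> (\<exists>\<epsilon>. eps = ereal \<epsilon> \<and> \<delta> = 2 * \<epsilon> * \<bar>t\<bar> \<and> 2 * \<epsilon> * \<bar>t\<bar> < r)"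
proof -
  have tp: "\<bar>t\<bar> > 0" using t by simp
  have "0 < \<delta> \<and> \<delta> \<le> r \<and> ereal (\<delta> / (2 * \<bar>t\<bar>)) \<le> eps \<and>
    (\<delta> = r \<or> (\<exists>\<epsilon>. eps = ereal \<epsilon> \<and> \<delta> = 2 * \<epsilon> * \<bar>t\<bar> \<and> 2 * \<epsilon> * \<bar>t\<bar> < r))"
  proof (cases eps)
    case PInf
    then have "2 * eps * ereal \<bar>t\<bar> = \<infinity>" using tp by (simp add: ereal_mult_infty)
    then have "\<delta> = r" unfolding \<delta>_def by simp
    then show ?thesis using r PInf by simp
  next
    case MInf then show ?thesis using eps by simp
  next
    case (real \<epsilon>)
    then have e: "\<epsilon> > 0" using eps by simp
    have d: "\<delta> = min (2 * \<epsilon> * \<bar>t\<bar>) r" unfolding \<delta>_def real by (simp add: min_def)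
    have "\<delta> / (2 * \<bar>t\<bar>) \<le> \<epsilon>" unfolding d using tp e by (simp add: divide_le_eq)
    then show ?thesis unfolding d using e tp r real by (auto simp: min_def)
  qed
  then show "0 < \<delta>" "\<delta> \<le> r" "ereal (\<delta> / (2 * \<bar>t\<bar>)) \<le> eps"
    "\<delta> = r \<or> (\<exists>\<epsilon>. eps = ereal \<epsilon> \<and> \<delta> = 2 * \<epsilon> * \<bar>t\<bar> \<and> 2 * \<epsilon> * \<bar>t\<bar> < r)" by auto
qed

lemma (in prob_space) per_theta:
  fixes X :: "nat \<Rightarrow> 'a \<Rightarrow> real" and \<theta> t L3 :: real and eps :: ereal
  assumes Xm: "\<And>k. k \<in> {1..n} \<Longrightarrow> X k \<in> borel_measurable M"
    and iX: "\<And>k. k \<in> {1..n} \<Longrightarrow> integrable M (X k)"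
    and iX2: "\<And>k. k \<in> {1..n} \<Longrightarrow> integrable M (\<lambda>\<omega>. (X k \<omega>)^2)"
    and m0: "\<And>k. k \<in> {1..n} \<Longrightarrow> (LINT \<omega>|M. X k \<omega>) = 0"
    and tot: "(\<Sum>k\<in>{1..n}. LINT \<omega>|M. (X k \<omega>)^2) = 1"
    and eps: "eps > 0"
    and Lb: "\<And>z. 0 < z \<Longrightarrow> ereal z \<le> eps \<Longrightarrow> z * Ln M X n z \<le> L3"
    and th: "0 < \<theta>" "\<theta> < 2*pi" and t: "t \<noteq> 0"
  defines "\<delta> \<equiv> real_of_ereal (min (2 * eps * ereal \<bar>t\<bar>) (ereal (sqrt (afun \<theta> / bfun \<theta>))))"
  shows "cmod (fbar M X n t) \<le> exp (- (afun \<theta> - 4 * (L3 * \<bar>t\<bar>) / \<delta> * (afun \<theta> + bfun \<theta> * \<delta>^2)) * t^2)"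
proof -
  have rpos: "sqrt (afun \<theta> / bfun \<theta>) > 0" using afun_pos[OF th] bfun_pos[OF th] by simp
  note D = delta_facts[OF eps t rpos, folded \<delta>_def]
  define e where "e = \<delta> / (2 * \<bar>t\<bar>)"
  have tp: "\<bar>t\<bar> > 0" using t by simp
  have e0: "e > 0" unfolding e_def using D(1) tp by simp
  have et: "2 * e * \<bar>t\<bar> \<le> sqrt (afun \<theta> / bfun \<theta>)" unfolding e_def using D(2) tp by simp
  have Lb': "z * Ln M X n z \<le> L3" if "0 < z" "z \<le> e" for z
  proof -
    have "ereal z \<le> ereal e" using that by simp
    also have "\<dots> \<le> eps" using D(3) unfolding e_def .
    finally show ?thesis using Lb that by auto
  qed
  have "cmod (fbar M X n t) \<le> exp (- (afun \<theta> - 2 * L3 / e * (afun \<theta> + 4 * bfun \<theta> * t^2 * e^2)) * t^2)"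
    by (rule key[OF Xm iX iX2 m0 tot th e0 et Lb'])
  moreover have "2 * L3 / e * (afun \<theta> + 4 * bfun \<theta> * t^2 * e^2) = 4 * (L3 * \<bar>t\<bar>) / \<delta> * (afun \<theta> + bfun \<theta> * \<delta>^2)"
  proof -
    have "t^2 = \<bar>t\<bar>^2" by simp
    then show ?thesis unfolding e_def using D(1) tp by (simp add: field_simps power2_eq_square)
  qed
  ultimately show ?thesis by simp
qed

theorem theorem4:
  fixes M :: "'a measure" and X :: "nat \<Rightarrow> 'a \<Rightarrow> real" and n :: nat
    and eps :: ereal and \<gamma> L :: real
  assumes "prob_space M"
    and "prob_space.indep_vars M (\<lambda>_. borel) X {1..n}"
    and "\<And>k. k \<in> {1..n} \<Longrightarrow> X k \<in> borel_measurable M"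
    and "\<And>k. k \<in> {1..n} \<Longrightarrow> integrable M (X k)"
    and "\<And>k. k \<in> {1..n} \<Longrightarrow> integrable M (\<lambda>\<omega>. (X k \<omega>)^2)"
    and "\<And>k. k \<in> {1..n} \<Longrightarrow> (LINT \<omega>|M. X k \<omega>) = 0"
    and "(\<Sum>k\<in>{1..n}. LINT \<omega>|M. (X k \<omega>)^2) = 1"
    and "\<gamma> > 0" and "eps > 0"
    and "L > 0"
    and "ereal (L^3) = LE3 M X n eps \<gamma>
         \<or> (eps \<noteq> \<infinity> \<and> ereal (L^3) = LR3 M X n (real_of_ereal eps) \<gamma>)
         \<or> ereal (L^3) = LS3 M X n eps"
  shows "(\<forall>t::real. cmod (fbar M X n t)
            \<le> exp (- real_of_ereal (k2 (L^3 * \<bar>t\<bar>) (2 * eps * ereal \<bar>t\<bar>)) * t^2))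
       \<and> (\<forall>L0 \<tau> t. L0 \<ge> L \<longrightarrow> ereal \<tau> \<ge> tau1 L0 eps \<longrightarrow> \<bar>t\<bar> \<le> \<tau> / L^3 \<longrightarrow>
            cmod (fbar M X n t) \<le> exp (- real_of_ereal (k1 \<tau>) * t^2))
       \<and> (\<forall>\<tau>::real. \<tau> \<ge> 0 \<longrightarrow> (k1 \<tau> > 0 \<longleftrightarrow> \<tau> < pi / 4))
       \<and> (\<forall>L0. L0 \<ge> L \<longrightarrow>
            ((\<exists>\<tau>::real. tau1 L0 eps \<le> ereal \<tau> \<and> \<tau> < pi / 4) \<longleftrightarrow> ereal L0 < cbrt_quarter eps))"
proof -
  interpret prob_space M by fact
  note Xm = assms(3) and iX = assms(4) and iX2 = assms(5) and m0 = assms(6) and tot = assms(7)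
  have \<gamma>: "\<gamma> > 0" and eps: "eps > 0" and L: "L > 0" using assms by auto
  have Lb: "z * Ln M X n z \<le> L^3" if z: "0 < z" "ereal z \<le> eps" for z
  proof -
    consider (E) "ereal (L^3) = LE3 M X n eps \<gamma>"
      | (R) "eps \<noteq> \<infinity>" "ereal (L^3) = LR3 M X n (real_of_ereal eps) \<gamma>"
      | (S) "ereal (L^3) = LS3 M X n eps"
      using assms(11) by blast
    then show ?thesis
    proof cases
      case E
      have "ereal (\<gamma> * \<bar>Mn M X n z\<bar> + z * Ln M X n z) \<le> LE3 M X n eps \<gamma>"
        unfolding LE3_def using z by (intro SUP_upper) auto
      then have "\<gamma> * \<bar>Mn M X n z\<bar> + z * Ln M X n z \<le> L^3" unfolding E[symmetric] by simp
      moreover have "\<gamma> * \<bar>Mn M X n z\<bar> \<ge> 0" using \<gamma> by simp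
      ultimately show ?thesis by linarith
    next
      case R
      obtain \<epsilon> where e: "eps = ereal \<epsilon>" using R(1) eps by (cases eps) auto
      have zle: "z \<le> \<epsilon>" using z e by simp
      have "ereal (z * Ln M X n z) \<le> (SUP z\<in>{0<..\<epsilon>}. ereal (z * Ln M X n z))"
        using z zle by (intro SUP_upper) auto
      then have "ereal (\<gamma> * \<bar>Mn M X n \<epsilon>\<bar>) + ereal (z * Ln M X n z) \<le> LR3 M X n (real_of_ereal eps) \<gamma>"
        unfolding LR3_def e real_of_ereal.simps by (rule add_left_mono)
      then have "ereal (\<gamma> * \<bar>Mn M X n \<epsilon>\<bar> + z * Ln M X n z) \<le> ereal (L^3)"
        unfolding R(2)[symmetric] by simp
      then have "\<gamma> * \<bar>Mn M X n \<epsilon>\<bar> + z * Ln M X n z \<le> L^3" by simp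
      moreover have "\<gamma> * \<bar>Mn M X n \<epsilon>\<bar> \<ge> 0" using \<gamma> by simp
      ultimately show ?thesis by linarith
    next
      case S
      have "ereal (z * Ln M X n z) \<le> LS3 M X n eps"
        unfolding LS3_def using z by (intro SUP_upper) auto
      then show ?thesis unfolding S[symmetric] by simp
    qed
  qed
  have le1: "cmod (fbar M X n t) \<le> 1" for t by (rule fbar_le1[OF Xm])
  note per = per_theta[OF Xm iX iX2 m0 tot eps Lb]
  have partI: "cmod (fbar M X n t) \<le> exp (- real_of_ereal (k2 (L^3 * \<bar>t\<bar>) (2 * eps * ereal \<bar>t\<bar>)) * t^2)" for t
  proof (cases "t = 0")
    case True then show ?thesis using le1[of t] by simp
  next
    case False
    define \<delta> where "\<delta> \<theta> = real_of_ereal (min (2 * eps * ereal \<bar>t\<bar>) (ereal (sqrt (afun \<theta> / bfun \<theta>))))" for \<theta>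
    define kk where "kk \<theta> = afun \<theta> - 4 * (L^3 * \<bar>t\<bar>) / \<delta> \<theta> * (afun \<theta> + bfun \<theta> * (\<delta> \<theta>)^2)" for \<theta>
    have "k2 (L^3 * \<bar>t\<bar>) (2 * eps * ereal \<bar>t\<bar>) = (SUP \<theta>\<in>{0<..<2*pi}. ereal (kk \<theta>))"
      unfolding k2_def
    proof (rule SUP_cong[OF refl])
      fix \<theta> assume th: "\<theta> \<in> {0<..<2*pi}"
      have rpos: "sqrt (afun \<theta> / bfun \<theta>) > 0" using afun_pos bfun_pos th by simp
      have "\<delta> \<theta> > 0" unfolding \<delta>_def using delta_facts(1)[OF eps False rpos] .
      then show "k3 (L^3 * \<bar>t\<bar>) (real_of_ereal (min (2 * eps * ereal \<bar>t\<bar>) (ereal (sqrt (afun \<theta> / bfun \<theta>))))) \<theta> = ereal (kk \<theta>)"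
        unfolding k3_def kk_def \<delta>_def[symmetric] by simp
    qed
    moreover have "cmod (fbar M X n t) \<le> exp (- real_of_ereal (SUP \<theta>\<in>{0<..<2*pi}. ereal (kk \<theta>)) * t^2)"
    proof (rule sup_exp)
      fix \<theta> assume th: "\<theta> \<in> {0<..<2*pi}"
      show "cmod (fbar M X n t) \<le> exp (- kk \<theta> * t^2)"
        unfolding kk_def \<delta>_def using per[of \<theta> t] th False by auto
    qed (use False le1 in auto)
    ultimately show ?thesis by simp
  qed
  have partII: "cmod (fbar M X n t) \<le> exp (- real_of_ereal (k1 \<tau>) * t^2)"
    if L0: "L0 \<ge> L" and tau: "ereal \<tau> \<ge> tau1 L0 eps" and tt: "\<bar>t\<bar> \<le> \<tau> / L^3" for L0 \<tau> t
  proof (cases "t = 0")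
    case True then show ?thesis using le1[of t] by simp
  next
    case False
    have L3: "L^3 > 0" using L by simp
    have tau': "L^3 * \<bar>t\<bar> \<le> \<tau>" using tt L3 by (simp add: le_divide_eq mult.commute)
    have tau0: "\<tau> \<ge> 0" using tau' L3 by (smt (verit) abs_ge_zero mult_nonneg_nonneg)
    have LL0: "L^3 \<le> L0^3" using L0 L by (intro power_mono) auto
    show ?thesis unfolding k1_def
    proof (rule sup_exp)
      fix \<theta> assume th: "\<theta> \<in> {0<..2*pi}"
      show "cmod (fbar M X n t) \<le> exp (- (afun \<theta> - 8 * \<tau> * sqrt (afun \<theta> * bfun \<theta>)) * t^2)"
      proof (cases "\<theta> = 2*pi")
        case True then show ?thesis using le1[of t] by (simp add: afun_2pi bfun_2pi)
      next
        case F2: False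
        then have th': "0 < \<theta>" "\<theta> < 2*pi" using th by auto
        define r where "r = sqrt (afun \<theta> / bfun \<theta>)"
        define \<delta> where "\<delta> = real_of_ereal (min (2 * eps * ereal \<bar>t\<bar>) (ereal r))"
        define b where "b = bfun \<theta>"
        have b0: "b > 0" unfolding b_def using bfun_pos th' by auto
        have rpos: "r > 0" unfolding r_def using afun_pos bfun_pos th' by simp
        have r2: "r \<le> 2*pi" unfolding r_def using sqrt_ab_le th' by auto
        have a_eq: "afun \<theta> = b * r * r" unfolding b_def r_def using ab_sqrt(1)[OF th'] .
        have s_eq: "sqrt (afun \<theta> * bfun \<theta>) = b * r" unfolding b_def r_def using ab_sqrt(2)[OF th'] .
        note D = delta_facts[OF eps False rpos, folded \<delta>_def]
        have bound: "cmod (fbar M X n t) \<le> exp (- (afun \<theta> - 4 * (L^3 * \<bar>t\<bar>) / \<delta> * (afun \<theta> + bfun \<theta> * \<delta>^2)) * t^2)"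
          using per[of \<theta> t] th' False unfolding \<delta>_def r_def by auto
        have cmp: "4 * (L^3 * \<bar>t\<bar>) / \<delta> * (afun \<theta> + bfun \<theta> * \<delta>^2) \<le> 8 * \<tau> * sqrt (afun \<theta> * bfun \<theta>)"
        proof -
          have ex: "4 * (L^3 * \<bar>t\<bar>) / \<delta> * (afun \<theta> + bfun \<theta> * \<delta>^2)
              = 4 * (L^3 * \<bar>t\<bar>) * b * r * r / \<delta> + 4 * (L^3 * \<bar>t\<bar>) * b * \<delta>"
            unfolding a_eq b_def[symmetric] using D(1) by (simp add: field_simps power2_eq_square)
          from D(4) show ?thesis
          proof
            assume dr: "\<delta> = r"
            have "4 * (L^3 * \<bar>t\<bar>) * b * r * r / \<delta> + 4 * (L^3 * \<bar>t\<bar>) * b * \<delta> = 8 * (L^3 * \<bar>t\<bar>) * (b * r)"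
              unfolding dr using rpos by (simp add: field_simps)
            also have "\<dots> \<le> 8 * \<tau> * (b * r)" using tau' b0 rpos by (intro mult_right_mono) auto
            finally show ?thesis unfolding ex s_eq .
          next
            assume "\<exists>\<epsilon>. eps = ereal \<epsilon> \<and> \<delta> = 2 * \<epsilon> * \<bar>t\<bar> \<and> 2 * \<epsilon> * \<bar>t\<bar> < r"
            then obtain \<epsilon> where e: "eps = ereal \<epsilon>" "\<delta> = 2 * \<epsilon> * \<bar>t\<bar>" "2 * \<epsilon> * \<bar>t\<bar> < r" by blast
            have ep: "\<epsilon> > 0" using e eps by simp
            have tp: "\<bar>t\<bar> > 0" using False by simp
            have "tau1 L0 eps = ereal (pi * L0^3 / \<epsilon>)" unfolding tau1_def e using ep by simp
            then have "pi * L0^3 / \<epsilon> \<le> \<tau>" using tau by simp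
            moreover have "pi * L^3 / \<epsilon> \<le> pi * L0^3 / \<epsilon>" using LL0 ep by (simp add: divide_right_mono)
            ultimately have piL: "pi * L^3 / \<epsilon> \<le> \<tau>" by linarith
            have t1: "4 * (L^3 * \<bar>t\<bar>) * b * r * r / \<delta> = 2 * L^3 * b * r * r / \<epsilon>"
              unfolding e(2) using tp ep by (simp add: field_simps)
            have "L^3 * r / \<epsilon> \<le> L^3 * (2*pi) / \<epsilon>"
              using r2 L3 ep by (intro divide_right_mono mult_left_mono) auto
            also have "\<dots> = 2 * (pi * L^3 / \<epsilon>)" by simp
            also have "\<dots> \<le> 2 * \<tau>" using piL by simp
            finally have "L^3 * r / \<epsilon> \<le> 2 * \<tau>" .
            then have "(L^3 * r / \<epsilon>) * (2 * b * r) \<le> (2 * \<tau>) * (2 * b * r)"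
              using b0 rpos by (intro mult_right_mono) auto
            then have p1: "2 * L^3 * b * r * r / \<epsilon> \<le> 4 * \<tau> * (b * r)" by (simp add: field_simps)
            have "4 * (L^3 * \<bar>t\<bar>) * b * \<delta> \<le> 4 * \<tau> * b * r"
            proof -
              have "(L^3 * \<bar>t\<bar>) * (b * \<delta>) \<le> \<tau> * (b * r)"
                using tau' b0 D(1) D(2) tau0 by (intro mult_mono mult_left_mono) auto
              then show ?thesis by (simp add: algebra_simps)
            qed
            then show ?thesis unfolding ex s_eq t1 using p1 by (simp add: algebra_simps)
          qed
        qed
        have "exp (- (afun \<theta> - 4 * (L^3 * \<bar>t\<bar>) / \<delta> * (afun \<theta> + bfun \<theta> * \<delta>^2)) * t^2)
            \<le> exp (- (afun \<theta> - 8 * \<tau> * sqrt (afun \<theta> * bfun \<theta>)) * t^2)"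
          using cmp by (intro iffD2[OF exp_le_cancel_iff] mult_right_mono) auto
        then show ?thesis using bound by linarith
      qed
    qed (use False le1 in auto)
  qed
  have partIV: "(\<exists>\<tau>::real. tau1 L0 eps \<le> ereal \<tau> \<and> \<tau> < pi / 4) \<longleftrightarrow> ereal L0 < cbrt_quarter eps"
    if "L0 \<ge> L" for L0
  proof -
    have "L0 > 0" using that L by linarith
    then show ?thesis using tau1_part eps by blast
  qed
  show ?thesis
    using partI partII k1_pos_iff partIV by blast
qed

end
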